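(* Fix an integer $d\ge1$, $\alpha>0$, constants $M,\tilde M>0$ satisfying both $M/(2^{4\alpha+1}\tilde M)\ge1$ and $M/\tilde M\ge (1-5^{-\alpha})^{-1}\bigl(1+\frac{1}{5^\alpha-3^\alpha}\bigr)80^\alpha$, and a noise level $\sigma^2\ge0$. Let $\mathcal{C}_{\alpha,0}$ be the class of all CSO problems on $[0,1]^d$ satisfying conditions (A1)–(A3) below with $\beta=\alpha$ and these $M,\tilde M,\sigma$. Then for any admissible algorithm (as defined below) there exist constants $b_1,b_3>0$ and positive constants $b_5,b_6$ independent of $n$ and $\sigma^2$ such that for all $n\ge\max\{b_1\sigma^2,\,b_3\}$, $$\sup_{\mathcal{CSO}\in\mathcal{C}_{\alpha,0}}\mathbb{E}_{\mathcal{CSO}}\bigl[y(\mathbf{x}^* )-y(\hat{\mathbf{x}}_n^* )\bigr]\ \ge\ b_6\cdot\max\Bigl\{\bigl(\sigma^2/n\bigr)^{1/2},\ \exp(-b_5 n)\Bigr\},$$ where $\hat{\mathbf{x}}_n^*$ is the output of the algorithm run with budget $n$ and $\mathbf{x}^*$ the maximizer of the objective $y$.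
   Context: A CSO problem consists of an unknown objective $y:[0,1]^d\to\mathbb{R}$; an algorithm may query $\mathbf{x}\in[0,1]^d$ and observes $Y(\mathbf{x})=y(\mathbf{x})+\varepsilon(\mathbf{x})$. $\|\mathbf{x}\|_\infty=\max_l|x_l|$. Conditions: (A1) $y$ has a unique maximizer $\mathbf{x}^*$ over $[0,1]^d$; (A2) given $\mathbf{x}$, $\varepsilon(\mathbf{x})$ is independent of everything else and $\mathbb{E}[\exp(\lambda\varepsilon(\mathbf{x}))]\le\exp(\lambda^2\sigma^2/2)$ for all $\lambda\in\mathbb{R}$; (A3) $\tilde M\|\mathbf{x}^*-\mathbf{x}\|_\infty^\beta\le|y(\mathbf{x}^* )-y(\mathbf{x})|\le M\|\mathbf{x}^*-\mathbf{x}\|_\infty^\alpha$ for all $\mathbf{x}\in[0,1]^d$. An algorithm with budget $n$ is admissible if: (i) $\mathbf{x}_1$ is deterministic or a measurable function of a random vector $U_1$; (ii) for $t=1,\dots,n-1$, $\mathbf{x}_{t+1}$ is a measurable function of $\mathbf{x}_1,Y(\mathbf{x}_1),\dots,\mathbf{x}_t,Y(\mathbf{x}_t)$ and a random vector $U_{t+1}$; (iii) the output $\hat{\mathbf{x}}_n^*$ is a measurable function of $\mathbf{x}_1,Y(\mathbf{x}_1),\dots,\mathbf{x}_n,Y(\mathbf{x}_n)$ and a random vector $U_n^*$; (iv) $\hat{\mathbf{x}}_n^*\in\{\mathbf{x}_1,\dots,\mathbf{x}_n\}$; $U_1,\dots,U_n,U_n^*$ are independent random vectors, independent of the noise. An "algorithm"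 means such a rule specified for each budget $n$. $\mathbb{E}_{\mathcal{CSO}}$ is expectation under problem $\mathcal{CSO}$. *)

theory Defs
  imports "HOL-Probability.Probability"
begin

text \<open>Points of the search space [0,1]^d are vectors of type real^'d (d = CARD('d) \<ge> 1).\<close>

definition cso_cube :: "(real^'d) set" where
  "cso_cube = {x. \<forall>i. 0 \<le> x $ i \<and> x $ i \<le> 1}"

definition linf :: "real^'d \<Rightarrow> real" where
  "linf x = Max (range (\<lambda>i. \<bar>x $ i\<bar>))"

definition cso_opt :: "(real^'d \<Rightarrow> real) \<Rightarrow> real^'d" where
  "cso_opt y = (THE x. x \<in> cso_cube \<and> (\<forall>z\<in>cso_cube. y z \<le> y x))"

text \<open>A CSO problem is a pair (y, N): objective y and noise kernel N, where N x is the
  distribution of the noise eps(x) at query x (fresh independent draw at every query).\<close>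
definition cso_class :: "real \<Rightarrow> real \<Rightarrow> real \<Rightarrow> real \<Rightarrow>
    ((real^'d \<Rightarrow> real) \<times> (real^'d \<Rightarrow> real measure)) set" where
  "cso_class \<alpha> M Mt \<sigma> = {(y, N).
     y \<in> borel_measurable borel \<and>
     N \<in> borel \<rightarrow>\<^sub>M prob_algebra borel \<and>
     (\<exists>!x. x \<in> cso_cube \<and> (\<forall>z\<in>cso_cube. y z \<le> y x)) \<and>
     (\<forall>x\<in>cso_cube. \<forall>lam::real.
        (\<integral>\<^sup>+ e. ennreal (exp (lam * e)) \<partial>(N x)) \<le> ennreal (exp (lam\<^sup>2 * \<sigma>\<^sup>2 / 2))) \<and>
     (\<forall>x\<in>cso_cube.
        Mt * linf (cso_opt y - x) powr \<alpha> \<le> \<bar>y (cso_opt y) - y x\<bar> \<and>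
        \<bar>y (cso_opt y) - y x\<bar> \<le> M * linf (cso_opt y - x) powr \<alpha>)}"

text \<open>Histories: h i = (x_{i+1}, Y(x_{i+1})); only the first t entries matter after t steps.\<close>
definition hist_space :: "(nat \<Rightarrow> ((real^'d) \<times> real)) measure" where
  "hist_space = PiM UNIV (\<lambda>_. borel)"

text \<open>Distribution of the history after t queries, for objective y, noise kernel N and
  query kernels K t (the randomized rule choosing x_{t+1} from the history).\<close>
primrec cso_run :: "(real^'d \<Rightarrow> real) \<Rightarrow> (real^'d \<Rightarrow> real measure) \<Rightarrow>
    (nat \<Rightarrow> (nat \<Rightarrow> ((real^'d) \<times> real)) \<Rightarrow> (real^'d) measure) \<Rightarrow> nat \<Rightarrow>
    (nat \<Rightarrow> ((real^'d) \<times> real)) measure" where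
  "cso_run y N K 0 = return hist_space (\<lambda>_. (0, 0))"
| "cso_run y N K (Suc t) =
     cso_run y N K t \<bind> (\<lambda>h. K t h \<bind> (\<lambda>x. N x \<bind>
        (\<lambda>e. return hist_space (h(t := (x, y x + e))))))"

text \<open>Randomization via independent random vectors U_t is represented by Markov
  kernels (equivalent formulation).\<close>
definition admissible ::
  "(nat \<Rightarrow> nat \<Rightarrow> (nat \<Rightarrow> ((real^'d) \<times> real)) \<Rightarrow> (real^'d) measure) \<Rightarrow>
   (nat \<Rightarrow> (nat \<Rightarrow> ((real^'d) \<times> real)) \<Rightarrow> (real^'d) measure) \<Rightarrow> bool" where
  "admissible K Outp \<longleftrightarrow> (\<forall>n\<ge>1.
     (\<forall>t<n. K n t \<in> hist_space \<rightarrow>\<^sub>M prob_algebra borel \<and>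
            (\<forall>h h'. (\<forall>i<t. h i = h' i) \<longrightarrow> K n t h = K n t h') \<and>
            (\<forall>h. AE x in K n t h. x \<in> cso_cube)) \<and>
     Outp n \<in> hist_space \<rightarrow>\<^sub>M prob_algebra borel \<and>
     (\<forall>h h'. (\<forall>i<n. h i = h' i) \<longrightarrow> Outp n h = Outp n h') \<and>
     (\<forall>h. AE x in Outp n h. \<exists>i<n. x = fst (h i)))"

definition expected_regret ::
  "((real^'d \<Rightarrow> real) \<times> (real^'d \<Rightarrow> real measure)) \<Rightarrow>
   (nat \<Rightarrow> nat \<Rightarrow> (nat \<Rightarrow> ((real^'d) \<times> real)) \<Rightarrow> (real^'d) measure) \<Rightarrow>
   (nat \<Rightarrow> (nat \<Rightarrow> ((real^'d) \<times> real)) \<Rightarrow> (real^'d) measure) \<Rightarrow> nat \<Rightarrow> real" where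
  "expected_regret P K Outp n = (case P of (y, N) \<Rightarrow>
     \<integral>h. (\<integral>x. y (cso_opt y) - y x \<partial>(Outp n h)) \<partial>(cso_run y N (K n) n))"

end

theory Submission
  imports Defs
begin

lemma finite_range_abs: "finite (range (\<lambda>i::'d::finite. \<bar>(x::real^'d) $ i\<bar>))" by simp

lemma linf_ge: "\<bar>x $ i\<bar> \<le> linf x"
  unfolding linf_def by (rule Max_ge) auto

lemma linf_le_iff: "linf x \<le> c \<longleftrightarrow> (\<forall>i. \<bar>x $ i\<bar> \<le> c)"
  unfolding linf_def by (subst Max_le_iff) auto

lemma linf_less_iff: "linf x < c \<longleftrightarrow> (\<forall>i. \<bar>x $ i\<bar> < c)"
  unfolding linf_def by (subst Max_less_iff) auto

lemma linf_nonneg: "0 \<le> linf x"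
  using linf_ge[of x] abs_ge_zero order_trans by blast

lemma linf_triangle: "linf (x + y) \<le> linf x + linf y"
  unfolding linf_le_iff using linf_ge abs_triangle_ineq
  by (metis add_mono order_trans vector_add_component)

lemma linf_commute: "linf (x - y) = linf (y - x)"
proof -
  have "\<And>x y. linf (x - y) \<le> linf (y - x)"
    unfolding linf_le_iff using linf_ge by (metis abs_minus_commute vector_minus_component)
  then show ?thesis by (meson order_antisym)
qed

definition cvec :: "real \<Rightarrow> real^'d" where "cvec D = (\<chi> i. D)"

lemma linf_cvec: "linf (cvec D :: real^'d) = \<bar>D\<bar>"
proof -
  have "linf (cvec D :: real^'d) \<le> \<bar>D\<bar>" unfolding linf_le_iff cvec_def by simp
  moreover have "\<bar>D\<bar> \<le> linf (cvec D :: real^'d)" using linf_ge[of "cvec D :: real^'d" undefined]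
    by (simp add: cvec_def)
  ultimately show ?thesis by simp
qed

lemma linf_zero[simp]: "linf (0::real^'d) = 0"
  using linf_cvec[of 0] by (simp add: cvec_def vec_eq_iff zero_vec_def)

lemma linf_cube: assumes "x \<in> cso_cube" "z \<in> cso_cube" shows "linf (x - z) \<le> 1"
  unfolding linf_le_iff
proof
  fix i
  from assms have "0 \<le> x $ i" "x $ i \<le> 1" "0 \<le> z $ i" "z $ i \<le> 1" by (auto simp: cso_cube_def)
  then show "\<bar>(x - z) $ i\<bar> \<le> 1" by simp
qed

lemma linf_measurable[measurable]: "linf \<in> borel_measurable borel"
proof -
  have "(\<lambda>x::real^'d. Max ((\<lambda>i. \<bar>x $ i\<bar>) ` UNIV)) \<in> borel_measurable borel"
    by (intro borel_measurable_Max) auto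
  then show ?thesis unfolding linf_def[abs_def] by simp
qed

definition ld :: "real^'d \<Rightarrow> real^'d \<Rightarrow> real" where "ld x c = min 1 (linf (x - c))"

lemma ld_measurable[measurable]: "(\<lambda>x. ld x c) \<in> borel_measurable borel"
  unfolding ld_def by measurable

lemma ld_nonneg: "0 \<le> ld x c" unfolding ld_def using linf_nonneg by simp
lemma ld_le1: "ld x c \<le> 1" unfolding ld_def by simp
lemma ld_commute: "ld x c = ld c x" unfolding ld_def using linf_commute by metis
lemma ld_self[simp]: "ld x x = 0" unfolding ld_def by simp

lemma ld_triangle: "ld x z \<le> ld x c + ld c z"
proof -
  have "linf (x - z) \<le> linf (x - c) + linf (c - z)"
    using linf_triangle[of "x - c" "c - z"] by simp
  then show ?thesis unfolding ld_def using linf_nonneg[of "x - c"] linf_nonneg[of "c - z"] by linarith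
qed

lemma ld_pos: "x \<noteq> c \<Longrightarrow> 0 < ld x c"
proof -
  assume "x \<noteq> c"
  then obtain i where "x $ i \<noteq> c $ i" by (metis vec_eq_iff)
  then have "0 < \<bar>(x - c) $ i\<bar>" by simp
  then have "0 < linf (x - c)" using linf_ge[of "x - c" i] by linarith
  then show ?thesis unfolding ld_def by simp
qed

lemma ld_cube: "x \<in> cso_cube \<Longrightarrow> z \<in> cso_cube \<Longrightarrow> ld x z = linf (x - z)"
  unfolding ld_def using linf_cube[of x z] by linarith

lemma cvec_cube: "0 \<le> D \<Longrightarrow> D \<le> 1 \<Longrightarrow> cvec D \<in> cso_cube"
  unfolding cso_cube_def cvec_def by simp

lemma zero_cube: "0 \<in> cso_cube"
  unfolding cso_cube_def by simp

lemma ld_0_cvec: "0 \<le> D \<Longrightarrow> D \<le> 1 \<Longrightarrow> ld 0 (cvec D :: real^'d) = D"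
proof -
  assume "0 \<le> D" "D \<le> 1"
  have "(0::real^'d) - cvec D = cvec (-D)" by (simp add: cvec_def vec_eq_iff)
  then have "linf ((0::real^'d) - cvec D) = linf (cvec (-D) :: real^'d)" by (rule arg_cong)
  also have "\<dots> = D" unfolding linf_cvec using \<open>0 \<le> D\<close> by simp
  finally have "linf ((0::real^'d) - cvec D) = D" .
  then show ?thesis unfolding ld_def using \<open>D \<le> 1\<close> by simp
qed

lemma cso_opt_eq:
  assumes "c \<in> cso_cube" "\<And>z. z \<in> cso_cube \<Longrightarrow> z \<noteq> c \<Longrightarrow> y z < y c"
  shows "cso_opt y = c"
  unfolding cso_opt_def
  by (rule the_equality) (use assms in \<open>auto intro: ccontr simp: not_less[symmetric], force\<close>)

locale fam =
  fixes a Mt M :: real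
  assumes a_pos: "0 < a" and Mt_pos: "0 < Mt" and M_big: "2 powr (4 * a + 1) * Mt \<le> M"
begin

definition "A = 2 powr a * Mt"

definition yb :: "real^'d \<Rightarrow> real" where "yb x = - (A * ld x 0 powr a)"

definition yp :: "real \<Rightarrow> real^'d \<Rightarrow> real" where
  "yp D x = max (yb x) (A * D powr a - M * ld x (cvec D) powr a)"

lemma A_pos: "0 < A" unfolding A_def using Mt_pos by simp

lemma two_pows: "2 powr (4 * a + 1) = 2 * 16 powr a"
proof -
  have e1: "2 powr (4 * a + 1) = 2 powr (4 * a) * 2" by (simp add: powr_add)
  have e2: "(2::real) powr (4 * a) = (2 powr 4) powr a" using powr_powr[of 2 4 a] by simp
  have e3: "(2::real) powr 4 = 16" using powr_realpow[of 2 4] by simp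
  show ?thesis unfolding e1 e2 e3 by simp
qed

lemma M_ge: "2 * 16 powr a * Mt \<le> M" using M_big two_pows by simp

lemma pow_ge1: "1 \<le> (c::real) \<Longrightarrow> 1 \<le> c powr a"
  using a_pos ge_one_powr_ge_zero by simp

lemma A_le_M: "A \<le> M"
proof -
  have "2 powr a \<le> 16 powr a" using a_pos by (intro powr_mono2) auto
  also have "16 powr a \<le> 2 * 16 powr a" by simp
  finally show ?thesis using M_ge Mt_pos unfolding A_def by (metis mult_right_mono less_eq_real_def order_trans)
qed

lemma Mt_le_A: "Mt \<le> A"
  unfolding A_def using pow_ge1[of 2] Mt_pos by simp

lemma M_pos: "0 < M" using A_le_M A_pos by simp

lemma yb_le0: "yb (x::real^'d) \<le> 0" unfolding yb_def using A_pos ld_nonneg by simp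
lemma yb_0[simp]: "yb 0 = 0" unfolding yb_def by simp
lemma yb_ge: "- A \<le> yb x"
proof -
  have "ld x 0 powr a \<le> 1 powr a" using a_pos ld_nonneg ld_le1 by (intro powr_mono2) auto
  then show ?thesis unfolding yb_def using A_pos by (simp add: mult_left_le)
qed

lemma yb_lt: "x \<noteq> 0 \<Longrightarrow> yb (x::real^'d) < 0"
  unfolding yb_def using ld_pos[of x 0] A_pos by simp

lemma opt_yb: "cso_opt yb = 0"
  by (rule cso_opt_eq) (auto simp: zero_cube yb_lt)

lemma yb_measurable[measurable]: "yb \<in> borel_measurable borel"
  unfolding yb_def[abs_def] by measurable

lemma yp_measurable[measurable]: "yp D \<in> borel_measurable borel"
  unfolding yp_def[abs_def] by measurable

context
  fixes D :: real assumes D: "0 < D" "D \<le> 1"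
begin

lemma c0: "ld (0::real^'d) (cvec D) = D" "ld (cvec D) (0::real^'d) = D"
proof -
  show e: "ld (0::real^'d) (cvec D) = D" by (rule ld_0_cvec) (use D in auto)
  show "ld (cvec D) (0::real^'d) = D" using e ld_commute[of "0::real^'d" "cvec D"] by simp
qed

lemma yp_c: "yp D (cvec D :: real^'d) = A * D powr a"
  proof -
  have "0 \<le> A * D powr a" using A_pos by simp
  then show ?thesis unfolding yp_def using yb_le0[of "cvec D :: real^'d"] by (simp add: max_def)
qed

lemma yp_lt: "(x::real^'d) \<noteq> cvec D \<Longrightarrow> yp D x < A * D powr a"
proof -
  assume "x \<noteq> cvec D"
  then have "0 < ld x (cvec D) powr a" using ld_pos[of x "cvec D"] by simp
  then have "A * D powr a - M * ld x (cvec D) powr a < A * D powr a" using M_pos by simp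
  moreover have "0 < A * D powr a" using A_pos D by simp
  then have "yb x < A * D powr a" using yb_le0[of x] by linarith
  ultimately show ?thesis unfolding yp_def by simp
qed

lemma opt_yp: "cso_opt (yp D) = cvec D"
  by (rule cso_opt_eq) (use D in \<open>auto simp: cvec_cube yp_c yp_lt\<close>)

lemma yp_ge_yb: "yb (x::real^'d) \<le> yp D x" unfolding yp_def by simp

lemma gap_yp: "yp D (cvec D :: real^'d) - yp D (x::real^'d) = min (M * ld x (cvec D) powr a) (A * D powr a + A * ld x 0 powr a)"
  unfolding yp_c unfolding yp_def yb_def by (simp add: min_def max_def)

lemma pow_max2: "0 \<le> u \<Longrightarrow> 0 \<le> v \<Longrightarrow> w \<le> u + v \<Longrightarrow> 0 \<le> w \<Longrightarrow> w powr a \<le> 2 powr a * (u powr a + v powr a)"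
proof -
  assume uv: "0 \<le> u" "0 \<le> v" "w \<le> u + v" "0 \<le> w"
  have "w \<le> 2 * max u v" using uv by linarith
  then have "w powr a \<le> (2 * max u v) powr a" using uv a_pos by (intro powr_mono2) auto
  also have "\<dots> = 2 powr a * max u v powr a" using uv by (simp add: powr_mult)
  also have "max u v powr a \<le> u powr a + v powr a" by (simp add: max_def)
  finally show ?thesis by (simp add: mult_left_mono)
qed

lemma A3_yp_low: "Mt * ld (x::real^'d) (cvec D) powr a \<le> yp D (cvec D :: real^'d) - yp D x"
proof -
  have t: "ld x (cvec D) \<le> ld x 0 + D" using ld_triangle[of x "cvec D" 0] by (simp add: c0)
  have "ld x (cvec D) powr a \<le> 2 powr a * (ld x 0 powr a + D powr a)"
    by (rule pow_max2) (use t ld_nonneg D in auto)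
  then have "Mt * ld x (cvec D) powr a \<le> Mt * (2 powr a * (ld x 0 powr a + D powr a))"
    using Mt_pos by (simp add: mult_left_mono)
  then have "Mt * ld x (cvec D) powr a \<le> A * D powr a + A * ld x 0 powr a"
    unfolding A_def by (simp add: algebra_simps)
  moreover have "Mt * ld x (cvec D) powr a \<le> M * ld x (cvec D) powr a"
    using Mt_le_A A_le_M by (intro mult_right_mono) auto
  ultimately show ?thesis unfolding gap_yp by simp
qed

lemma A3_yp_up: "yp D (cvec D :: real^'d) - yp D (x::real^'d) \<le> M * ld x (cvec D) powr a"
  unfolding gap_yp by simp

lemma gap_sum: "Mt * D powr a \<le> (yb 0 - yb (x::real^'d)) + (yp D (cvec D :: real^'d) - yp D x)"
proof -
  have t: "D \<le> ld x 0 + ld x (cvec D)" using ld_triangle[of 0 "cvec D" x] ld_commute[of 0 x] by (simp add: c0)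
  have half: "(D/2) powr a = D powr a / 2 powr a" using D by (simp add: powr_divide)
  have p2: "0 < 2 powr a" by simp
  show ?thesis
  proof (cases "D/2 \<le> ld x 0")
    case True
    then have "(D/2) powr a \<le> ld x 0 powr a" using D a_pos by (intro powr_mono2) auto
    then have "A * (D/2) powr a \<le> A * ld x 0 powr a" using A_pos by simp
    moreover have "A * (D/2) powr a = Mt * D powr a" unfolding half A_def using p2 by simp
    moreover have "0 \<le> yp D (cvec D :: real^'d) - yp D x" proof -
    have "0 \<le> Mt * ld x (cvec D) powr a" using Mt_pos by simp
    then show ?thesis using A3_yp_low[of x] by linarith
  qed
    ultimately show ?thesis unfolding yb_def by simp
  next
    case False
    then have "D/2 \<le> ld x (cvec D)" using t by simp
    then have "(D/2) powr a \<le> ld x (cvec D) powr a" using D a_pos by (intro powr_mono2) auto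
    then have "M * (D/2) powr a \<le> M * ld x (cvec D) powr a" using M_pos by simp
    moreover have "Mt * D powr a \<le> M * (D/2) powr a"
    proof -
      have "2 powr a \<le> 16 powr a" using a_pos by (intro powr_mono2) auto
      then have "2 powr a * Mt \<le> 16 powr a * Mt" using Mt_pos by simp
      also have "\<dots> \<le> 2 * 16 powr a * Mt" using Mt_pos by simp
      finally have "2 powr a * Mt \<le> M" using M_ge by linarith
      then have "(2 powr a * Mt) * D powr a \<le> M * D powr a" by (intro mult_right_mono) auto
      then have "Mt * D powr a * 2 powr a \<le> M * D powr a" by (simp add: algebra_simps)
      then show ?thesis unfolding half using p2 by (simp add: field_simps)
    qed
    moreover have "Mt * D powr a \<le> A * D powr a + A * ld x 0 powr a"
    proof -
      have "Mt * D powr a \<le> A * D powr a" using Mt_le_A by (simp add: mult_right_mono)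
      moreover have "0 \<le> A * ld x 0 powr a" using A_pos by simp
      ultimately show ?thesis by linarith
    qed
    ultimately have "Mt * D powr a \<le> yp D (cvec D :: real^'d) - yp D x" unfolding gap_yp by simp
    moreover have "0 \<le> yb 0 - yb x" using yb_le0 by simp
    ultimately show ?thesis by simp
  qed
qed

lemma region: "yp D (x::real^'d) \<noteq> yb x \<Longrightarrow> ld x (cvec D) < D / 4"
proof (rule ccontr)
  assume ne: "yp D x \<noteq> yb x" and "\<not> ld x (cvec D) < D / 4"
  then have b: "D / 4 \<le> ld x (cvec D)" by simp
  let ?b = "ld x (cvec D)"
  have lt: "M * ?b powr a < A * D powr a + A * ld x 0 powr a"
    using ne unfolding yp_def yb_def by (simp add: max_def split: if_splits)
  have t: "ld x 0 \<le> ?b + D" using ld_triangle[of x 0 "cvec D"] by (simp add: c0)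
  have "ld x 0 powr a \<le> (5 * ?b) powr a" using t b ld_nonneg a_pos by (intro powr_mono2) auto
  moreover have "D powr a \<le> (5 * ?b) powr a" using b D a_pos by (intro powr_mono2) auto
  ultimately have "A * D powr a \<le> A * (5 * ?b) powr a" "A * ld x 0 powr a \<le> A * (5 * ?b) powr a"
    using A_pos by (simp_all add: mult_left_mono)
  then have "A * D powr a + A * ld x 0 powr a \<le> 2 * A * (5 * ?b) powr a" by simp
  also have "\<dots> = 2 * Mt * (2 powr a * 5 powr a) * ?b powr a" unfolding A_def using ld_nonneg by (simp add: powr_mult)
  also have "2 powr a * 5 powr a = 10 powr a" by (simp add: powr_mult[symmetric])
  also have "2 * Mt * 10 powr a * ?b powr a \<le> 2 * Mt * 16 powr a * ?b powr a"
  proof -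
    have "10 powr a \<le> 16 powr a" using a_pos by (intro powr_mono2) auto
    then have "2 * Mt * 10 powr a \<le> 2 * Mt * 16 powr a" using Mt_pos by simp
    then show ?thesis by (simp add: mult_right_mono)
  qed
  also have "\<dots> \<le> M * ?b powr a" using M_ge by (intro mult_right_mono) (auto simp: algebra_simps)
  finally show False using lt by simp
qed

lemma region_linf: "yp D (x::real^'d) \<noteq> yb x \<Longrightarrow> linf (x - cvec D) < D / 4"
  using region[of x] D unfolding ld_def by (simp add: min_def split: if_splits)

lemma diff_bound: "yp D (x::real^'d) - yb x \<le> 2 * 4 powr a * Mt * D powr a"
proof (cases "yp D x = yb x")
  case True then show ?thesis using Mt_pos by simp
next
  case False
  let ?b = "ld x (cvec D)"
  have b: "?b < D / 4" using region[OF False] .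
  have t: "ld x 0 \<le> ?b + D" using ld_triangle[of x 0 "cvec D"] by (simp add: c0)
  have t2: "ld x 0 \<le> 2 * D" using t b D by linarith
  have "ld x 0 powr a \<le> (2 * D) powr a" using t2 ld_nonneg[of x 0] a_pos by (intro powr_mono2) auto
  also have "\<dots> = 2 powr a * D powr a" using D by (simp add: powr_mult)
  finally have l0: "ld x 0 powr a \<le> 2 powr a * D powr a" .
  have "yp D x - yb x \<le> A * D powr a + A * ld x 0 powr a"
  proof -
    have "0 \<le> A * ld x 0 powr a" "0 \<le> A * D powr a" "0 \<le> M * ld x (cvec D) powr a" using A_pos M_pos by auto
    then show ?thesis unfolding yp_def yb_def by (simp add: max_def)
  qed
  also have "\<dots> \<le> A * D powr a + A * (2 powr a * D powr a)" using l0 A_pos by simp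
  also have "\<dots> = Mt * D powr a * (2 powr a + 2 powr a * 2 powr a)" unfolding A_def by (simp add: algebra_simps)
  also have "2 powr a * 2 powr a = 4 powr a" by (simp add: powr_mult[symmetric])
  also have "2 powr a + 4 powr a \<le> 2 * 4 powr a" using a_pos by (simp add: powr_mono2)
  then have "Mt * D powr a * (2 powr a + 4 powr a) \<le> Mt * D powr a * (2 * 4 powr a)" using Mt_pos by (intro mult_left_mono) auto
  finally show ?thesis by (simp add: algebra_simps)
qed

lemma yp_bounds: "0 \<le> yp D (cvec D :: real^'d) - yp D x" "yp D (cvec D :: real^'d) - yp D (x::real^'d) \<le> 2 * A"
proof -
  show "0 \<le> yp D (cvec D :: real^'d) - yp D x" proof -
    have "0 \<le> Mt * ld x (cvec D) powr a" using Mt_pos by simp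
    then show ?thesis using A3_yp_low[of x] by linarith
  qed
  have "D powr a \<le> 1 powr a" using D a_pos by (intro powr_mono2) auto
  then have "yp D (cvec D :: real^'d) \<le> A" unfolding yp_c using A_pos by (simp add: mult_left_le)
  moreover have "- A \<le> yp D x" using yp_ge_yb[of x] yb_ge[of x] by linarith
  ultimately show "yp D (cvec D :: real^'d) - yp D x \<le> 2 * A" by linarith
qed

end

lemma yb_bounds: "0 \<le> yb 0 - yb x" "yb 0 - yb (x::real^'d) \<le> A"
  using yb_le0[of x] yb_ge[of x] by auto

end

type_synonym 'd hist = "nat \<Rightarrow> ((real^'d) \<times> real)"


definition stp :: "(real^'d \<Rightarrow> real) \<Rightarrow> (real^'d \<Rightarrow> real measure) \<Rightarrow>
    ((nat \<Rightarrow> ((real^'d) \<times> real)) \<Rightarrow> (real^'d) measure) \<Rightarrow> nat \<Rightarrow>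
    (nat \<Rightarrow> ((real^'d) \<times> real)) \<Rightarrow> (nat \<Rightarrow> ((real^'d) \<times> real)) measure" where
  "stp y N Kt t h = Kt h \<bind> (\<lambda>x. N x \<bind> (\<lambda>e. return hist_space (h(t := (x, y x + e)))))"

lemma run_Suc: "cso_run y N K (Suc t) = cso_run y N K t \<bind> stp y N (K t) t"
  by (simp add: stp_def[abs_def])

lemma space_hist[simp]: "space hist_space = UNIV"
  unfolding hist_space_def by (simp add: space_PiM)

lemma upd_meas[measurable]:
  fixes y :: "real^'d \<Rightarrow> real"
  assumes [measurable]: "y \<in> borel_measurable borel"
  shows "(\<lambda>((h::nat \<Rightarrow> ((real^'d) \<times> real), x::real^'d), e::real). h(t := (x, y x + e)))
     \<in> (hist_space \<Otimes>\<^sub>M borel) \<Otimes>\<^sub>M borel \<rightarrow>\<^sub>M hist_space"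
proof -
  have m1: "(\<lambda>p::('d hist \<times> (real^'d)) \<times> real. fst (fst p)) \<in> (hist_space \<Otimes>\<^sub>M borel) \<Otimes>\<^sub>M borel \<rightarrow>\<^sub>M PiM UNIV (\<lambda>_. borel)"
    unfolding hist_space_def by measurable
  have m2: "(\<lambda>p::('d hist \<times> (real^'d)) \<times> real. (snd (fst p), y (snd (fst p)) + snd p)) \<in> (hist_space \<Otimes>\<^sub>M borel) \<Otimes>\<^sub>M borel \<rightarrow>\<^sub>M borel"
    unfolding borel_prod[symmetric] by measurable
  have "(\<lambda>p::('d hist \<times> (real^'d)) \<times> real. (fst (fst p))(t := (snd (fst p), y (snd (fst p)) + snd p))) \<in> (hist_space \<Otimes>\<^sub>M borel) \<Otimes>\<^sub>M borel \<rightarrow>\<^sub>M PiM UNIV (\<lambda>_. borel)"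
    by (rule measurable_fun_upd[where J=UNIV, OF _ m1 m2]) auto
  then show ?thesis unfolding hist_space_def by (simp add: case_prod_beta')
qed

lemma stp_meas:
  fixes y :: "real^'d \<Rightarrow> real"
  assumes y[measurable]: "y \<in> borel_measurable borel"
    and N[measurable]: "N \<in> borel \<rightarrow>\<^sub>M prob_algebra borel"
    and K[measurable]: "Kt \<in> hist_space \<rightarrow>\<^sub>M prob_algebra borel"
  shows "stp y N Kt t \<in> hist_space \<rightarrow>\<^sub>M prob_algebra hist_space"
proof -
  have r: "(\<lambda>(p, e). return hist_space ((\<lambda>((h::nat \<Rightarrow> ((real^'d) \<times> real), x::real^'d), e::real). h(t := (x, y x + e))) (p, e)))
     \<in> (hist_space \<Otimes>\<^sub>M borel) \<Otimes>\<^sub>M borel \<rightarrow>\<^sub>M prob_algebra hist_space"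
    using measurable_compose[OF upd_meas[OF y, of t] measurable_return_prob_space] by (simp add: case_prod_beta')
  have i: "(\<lambda>(h, x). N x \<bind> (\<lambda>e. return hist_space (h(t := (x, y x + e)))))
     \<in> hist_space \<Otimes>\<^sub>M borel \<rightarrow>\<^sub>M prob_algebra hist_space"
  proof -
    have "(\<lambda>p. N (snd p) \<bind> (\<lambda>e. return hist_space ((\<lambda>((h::nat \<Rightarrow> ((real^'d) \<times> real), x::real^'d), e::real). h(t := (x, y x + e))) (p, e))))
     \<in> hist_space \<Otimes>\<^sub>M borel \<rightarrow>\<^sub>M prob_algebra hist_space"
      by (rule measurable_bind_prob_space2[OF _ r]) measurable
    then show ?thesis by (simp add: case_prod_beta')
  qed
  show ?thesis unfolding stp_def[abs_def]
    by (rule measurable_bind_prob_space2[OF K i])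
qed

lemma return_hist_space: "return hist_space h \<in> space (prob_algebra hist_space)"
  using measurable_space[OF measurable_return_prob_space[of hist_space], of h] by simp

lemma run_space:
  fixes y :: "real^'d \<Rightarrow> real"
  assumes y: "y \<in> borel_measurable borel" and N: "N \<in> borel \<rightarrow>\<^sub>M prob_algebra borel"
    and K: "\<And>t. t < n \<Longrightarrow> Kn t \<in> hist_space \<rightarrow>\<^sub>M prob_algebra borel"
  shows "t \<le> n \<Longrightarrow> cso_run y N Kn t \<in> space (prob_algebra hist_space)"
proof (induction t)
  case 0 then show ?case using return_hist_space by simp
next
  case (Suc t)
  then have IH: "cso_run y N Kn t \<in> space (prob_algebra hist_space)" by simp
  have S: "stp y N (Kn t) t \<in> hist_space \<rightarrow>\<^sub>M prob_algebra hist_space"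
    using stp_meas[OF y N K] Suc by simp
  show ?case unfolding run_Suc
    using measurable_space[OF measurable_bind_prob_space[OF measurable_const[OF IH, of "count_space UNIV"] S], of undefined]
    by simp
qed

lemma prob_algebra_sets: "M \<in> space (prob_algebra X) \<Longrightarrow> sets M = sets X"
  by (simp add: space_prob_algebra)
lemma prob_algebra_prob: "M \<in> space (prob_algebra X) \<Longrightarrow> prob_space M"
  by (simp add: space_prob_algebra)

lemma kernel_sub: "K \<in> X \<rightarrow>\<^sub>M prob_algebra Y \<Longrightarrow> K \<in> X \<rightarrow>\<^sub>M subprob_algebra Y"
  by (rule measurable_prob_algebraD)

lemma ret_k:
  fixes y :: "real^'d \<Rightarrow> real"
  assumes y[measurable]: "y \<in> borel_measurable borel" and N[measurable]: "N \<in> borel \<rightarrow>\<^sub>M prob_algebra borel"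
  shows "(\<lambda>e. return hist_space (h(t := (x, y x + e)))) \<in> borel \<rightarrow>\<^sub>M subprob_algebra hist_space"
proof -
  have "(\<lambda>e. h(t := (x, y x + e))) \<in> borel \<rightarrow>\<^sub>M hist_space"
    using measurable_compose[OF measurable_Pair[OF measurable_const[of "(h,x)"] measurable_ident] upd_meas[OF y, of t]]
    by (simp add: case_prod_beta' space_pair_measure)
  then show ?thesis by (rule measurable_compose[OF _ return_measurable])
qed

lemma inner_k:
  fixes y :: "real^'d \<Rightarrow> real"
  assumes y[measurable]: "y \<in> borel_measurable borel" and N[measurable]: "N \<in> borel \<rightarrow>\<^sub>M prob_algebra borel"
  shows "(\<lambda>x. N x \<bind> (\<lambda>e. return hist_space (h(t := (x, y x + e))))) \<in> borel \<rightarrow>\<^sub>M subprob_algebra hist_space"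
proof -
  have "(\<lambda>x. N x \<bind> (\<lambda>e. return hist_space (h(t := (x, y x + e))))) \<in> borel \<rightarrow>\<^sub>M prob_algebra hist_space"
  proof (rule measurable_bind_prob_space2[OF N])
    have "(\<lambda>(p::'d hist \<times> (real^'d), e). return hist_space ((\<lambda>((h::'d hist, x::real^'d), e::real). h(t := (x, y x + e))) (p, e)))
      \<in> (hist_space \<Otimes>\<^sub>M borel) \<Otimes>\<^sub>M borel \<rightarrow>\<^sub>M prob_algebra hist_space"
      using measurable_compose[OF upd_meas[OF y, of t] measurable_return_prob_space] by (simp add: case_prod_beta')
    then have "(\<lambda>p. return hist_space ((\<lambda>((h::'d hist, x::real^'d), e::real). h(t := (x, y x + e))) ((h, fst p), snd p)))
      \<in> borel \<Otimes>\<^sub>M borel \<rightarrow>\<^sub>M prob_algebra hist_space"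
    proof -
      have g: "(\<lambda>p::(real^'d) \<times> real. ((h, fst p), snd p)) \<in> borel \<Otimes>\<^sub>M borel \<rightarrow>\<^sub>M (hist_space \<Otimes>\<^sub>M borel) \<Otimes>\<^sub>M borel"
        by measurable
      show ?thesis using measurable_compose[OF g \<open>_ \<in> (hist_space \<Otimes>\<^sub>M borel) \<Otimes>\<^sub>M borel \<rightarrow>\<^sub>M prob_algebra hist_space\<close>]
        by (simp add: case_prod_beta')
    qed
    then show "(\<lambda>(x, e). return hist_space (h(t := (x, y x + e)))) \<in> borel \<Otimes>\<^sub>M borel \<rightarrow>\<^sub>M prob_algebra hist_space"
      by (simp add: case_prod_beta')
  qed
  then show ?thesis by (rule measurable_prob_algebraD)
qed

lemma stp_nn:
  fixes y :: "real^'d \<Rightarrow> real"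
  assumes y[measurable]: "y \<in> borel_measurable borel" and N[measurable]: "N \<in> borel \<rightarrow>\<^sub>M prob_algebra borel"
    and K[measurable]: "Kt \<in> hist_space \<rightarrow>\<^sub>M prob_algebra borel"
    and f[measurable]: "f \<in> borel_measurable hist_space"
  shows "(\<integral>\<^sup>+h'. f h' \<partial>stp y N Kt t h) = (\<integral>\<^sup>+x. \<integral>\<^sup>+e. f (h(t := (x, y x + e))) \<partial>N x \<partial>Kt h)"
proof -
  have sK: "sets (Kt h) = sets borel"
    using measurable_space[OF K, of h] by (simp add: space_prob_algebra)
  have r: "(\<lambda>e. return hist_space (h(t := (x, y x + e)))) \<in> borel \<rightarrow>\<^sub>M subprob_algebra hist_space" for x
    by (rule ret_k[OF y N])
  have i: "(\<lambda>x. N x \<bind> (\<lambda>e. return hist_space (h(t := (x, y x + e))))) \<in> borel \<rightarrow>\<^sub>M subprob_algebra hist_space"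
    by (rule inner_k[OF y N])
  have "(\<integral>\<^sup>+h'. f h' \<partial>stp y N Kt t h) = (\<integral>\<^sup>+x. \<integral>\<^sup>+h'. f h' \<partial>(N x \<bind> (\<lambda>e. return hist_space (h(t := (x, y x + e))))) \<partial>Kt h)"
    unfolding stp_def by (rule nn_integral_bind[OF f]) (use i sK in \<open>simp cong: measurable_cong_sets\<close>)
  also have "\<dots> = (\<integral>\<^sup>+x. \<integral>\<^sup>+e. \<integral>\<^sup>+h'. f h' \<partial>return hist_space (h(t := (x, y x + e))) \<partial>N x \<partial>Kt h)"
  proof (rule nn_integral_cong)
    fix x
    have sN: "sets (N x) = sets borel"
      using measurable_space[OF N, of x] by (simp add: space_prob_algebra)
    show "(\<integral>\<^sup>+h'. f h' \<partial>(N x \<bind> (\<lambda>e. return hist_space (h(t := (x, y x + e)))))) =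
       (\<integral>\<^sup>+e. \<integral>\<^sup>+h'. f h' \<partial>return hist_space (h(t := (x, y x + e))) \<partial>N x)"
      by (rule nn_integral_bind[OF f]) (use r sN in \<open>simp cong: measurable_cong_sets\<close>)
  qed
  also have "\<dots> = (\<integral>\<^sup>+x. \<integral>\<^sup>+e. f (h(t := (x, y x + e))) \<partial>N x \<partial>Kt h)"
    by (simp add: nn_integral_return)
  finally show ?thesis .
qed

lemma inner_nn:
  fixes y :: "real^'d \<Rightarrow> real"
  assumes y[measurable]: "y \<in> borel_measurable borel" and N[measurable]: "N \<in> borel \<rightarrow>\<^sub>M prob_algebra borel"
    and f[measurable]: "f \<in> borel_measurable hist_space"
  shows "(\<integral>\<^sup>+h'. f h' \<partial>(N x \<bind> (\<lambda>e. return hist_space (h(t := (x, y x + e)))))) = (\<integral>\<^sup>+e. f (h(t := (x, y x + e))) \<partial>N x)"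
proof -
  have sN: "sets (N x) = sets borel"
    using measurable_space[OF N, of x] by (simp add: space_prob_algebra)
  have "(\<integral>\<^sup>+h'. f h' \<partial>(N x \<bind> (\<lambda>e. return hist_space (h(t := (x, y x + e)))))) =
       (\<integral>\<^sup>+e. \<integral>\<^sup>+h'. f h' \<partial>return hist_space (h(t := (x, y x + e))) \<partial>N x)"
    by (rule nn_integral_bind[OF f]) (use ret_k[OF y N] sN in \<open>simp cong: measurable_cong_sets\<close>)
  then show ?thesis by (simp add: nn_integral_return)
qed

lemma inner_fun_meas:
  fixes y :: "real^'d \<Rightarrow> real"
  assumes y[measurable]: "y \<in> borel_measurable borel" and N[measurable]: "N \<in> borel \<rightarrow>\<^sub>M prob_algebra borel"
    and f[measurable]: "f \<in> borel_measurable hist_space"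
  shows "(\<lambda>x. \<integral>\<^sup>+e. f (h(t := (x, y x + e))) \<partial>N x) \<in> borel_measurable borel"
  using measurable_compose[OF inner_k[OF y N, of h t] nn_integral_measurable_subprob_algebra[OF f]]
  by (simp add: inner_nn[OF y N f])

definition avoid :: "(real^'d) set \<Rightarrow> nat \<Rightarrow> 'd hist set" where
  "avoid S t = {h. \<forall>i<t. fst (h i) \<notin> S}"

lemma fst_comp_meas[measurable]: "(\<lambda>h::('d::finite) hist. fst (h i)) \<in> hist_space \<rightarrow>\<^sub>M borel"
proof -
  have "(\<lambda>h::'d hist. h i) \<in> hist_space \<rightarrow>\<^sub>M borel" unfolding hist_space_def by measurable
  moreover have "(fst :: (real^'d) \<times> real \<Rightarrow> real^'d) \<in> borel \<rightarrow>\<^sub>M borel"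
    unfolding borel_prod[symmetric] by measurable
  ultimately show ?thesis by (rule measurable_compose)
qed

lemma avoid_sets[measurable]:
  fixes S :: "(real^'d) set"
  assumes S[measurable]: "S \<in> sets borel" shows "avoid S t \<in> sets hist_space"
proof -
  have "Measurable.pred hist_space (\<lambda>h::'d hist. \<forall>i\<in>{..<t}. fst (h i) \<notin> S)" by measurable
  moreover have "avoid S t = {h::'d hist. \<forall>i\<in>{..<t}. fst (h i) \<notin> S}" unfolding avoid_def by auto
  ultimately show ?thesis by (simp add: pred_def)
qed

lemma cube_sets[measurable]: "(cso_cube :: (real^'d) set) \<in> sets borel"
proof -
  have "closed (cso_cube :: (real^'d) set)"
  proof -
    have "cso_cube = (\<Inter>i. (\<lambda>x::real^'d. x $ i) -` {0..1})" unfolding cso_cube_def by auto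
    also have "closed \<dots>" by (intro closed_INT ballI closed_vimage_vec_nth) auto
    finally show ?thesis .
  qed
  then show ?thesis by (rule borel_closed)
qed

locale runsetup =
  fixes n :: nat and Kn :: "nat \<Rightarrow> 'd hist \<Rightarrow> (real^'d) measure"
  assumes K[measurable]: "\<And>t. t < n \<Longrightarrow> Kn t \<in> hist_space \<rightarrow>\<^sub>M prob_algebra borel"
begin

lemma run_sp:
  fixes y :: "real^'d \<Rightarrow> real"
  assumes y: "y \<in> borel_measurable borel" and N: "N \<in> borel \<rightarrow>\<^sub>M prob_algebra borel" and t: "t \<le> n"
  shows "cso_run y N Kn t \<in> space (prob_algebra hist_space)"
  by (rule run_space[OF y N K t]) auto

lemma run_sets:
  fixes y :: "real^'d \<Rightarrow> real"
  assumes y: "y \<in> borel_measurable borel" and N: "N \<in> borel \<rightarrow>\<^sub>M prob_algebra borel" and t: "t \<le> n"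
  shows "sets (cso_run y N Kn t) = sets hist_space"
  using run_sp[OF y N t] by (simp add: space_prob_algebra)

lemma stp_kernel:
  fixes y :: "real^'d \<Rightarrow> real"
  assumes y: "y \<in> borel_measurable borel" and N: "N \<in> borel \<rightarrow>\<^sub>M prob_algebra borel" and t: "t < n"
  shows "stp y N (Kn t) t \<in> cso_run y N Kn t \<rightarrow>\<^sub>M subprob_algebra hist_space"
  using measurable_prob_algebraD[OF stp_meas[OF y N K[OF t]]] run_sets[OF y N] t
  by (simp cong: measurable_cong_sets)

lemma run_ae_cube:
  fixes y :: "real^'d \<Rightarrow> real"
  assumes y[measurable]: "y \<in> borel_measurable borel" and N[measurable]: "N \<in> borel \<rightarrow>\<^sub>M prob_algebra borel"
    and cube: "\<And>t h. t < n \<Longrightarrow> AE x in Kn t h. x \<in> cso_cube"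
  shows "t \<le> n \<Longrightarrow> AE h in cso_run y N Kn t. \<forall>i<t. fst (h i) \<in> cso_cube"
proof (induction t)
  case 0 then show ?case by simp
next
  case (Suc t)
  then have IH: "AE h in cso_run y N Kn t. \<forall>i<t. fst (h i) \<in> cso_cube" and t: "t < n" by auto
  have P: "Measurable.pred hist_space (\<lambda>h::'d hist. \<forall>i\<in>{..<Suc t}. fst (h i) \<in> cso_cube)" by measurable
  have "AE h in cso_run y N Kn t. AE h' in stp y N (Kn t) t h. \<forall>i\<in>{..<Suc t}. fst (h' i) \<in> cso_cube"
    using IH
  proof eventually_elim
    case (elim h)
    have "(\<integral>\<^sup>+h'. indicator {h'. \<not> (\<forall>i\<in>{..<Suc t}. fst (h' i) \<in> cso_cube)} h' \<partial>stp y N (Kn t) t h) =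
      (\<integral>\<^sup>+x. \<integral>\<^sup>+e. indicator {h'. \<not> (\<forall>i\<in>{..<Suc t}. fst (h' i) \<in> cso_cube)} (h(t := (x, y x + e))) \<partial>N x \<partial>Kn t h)"
      by (rule stp_nn[OF y N K[OF t]]) (use P in \<open>simp add: pred_def\<close>)
    also have "\<dots> = (\<integral>\<^sup>+x. 0 \<partial>Kn t h)"
    proof (rule nn_integral_cong_AE)
      show "AE x in Kn t h. (\<integral>\<^sup>+e. indicator {h'. \<not> (\<forall>i\<in>{..<Suc t}. fst (h' i) \<in> cso_cube)} (h(t := (x, y x + e))) \<partial>N x) = 0"
        using cube[OF t, of h]
      proof eventually_elim
        case (elim x)
        then show ?case using elim(1) \<open>\<forall>i<t. fst (h i) \<in> cso_cube\<close>
          by (auto simp: indicator_def less_Suc_eq)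
      qed
    qed
    finally have "(\<integral>\<^sup>+h'. indicator {h'. \<not> (\<forall>i\<in>{..<Suc t}. fst (h' i) \<in> cso_cube)} h' \<partial>stp y N (Kn t) t h) = 0" by simp
    moreover have "{h' \<in> space (stp y N (Kn t) t h). \<forall>i\<in>{..<Suc t}. fst (h' i) \<in> cso_cube} \<in> sets (stp y N (Kn t) t h)"
    proof -
      have "stp y N (Kn t) t h \<in> space (prob_algebra hist_space)"
        using measurable_space[OF stp_meas[OF y N K[OF t]]] by simp
      then have "sets (stp y N (Kn t) t h) = sets hist_space" by (simp add: space_prob_algebra)
      moreover from this have "space (stp y N (Kn t) t h) = UNIV" using sets_eq_imp_space_eq by fastforce
      ultimately show ?thesis using P by (simp add: pred_def)
    qed
    ultimately show ?case by (subst AE_iff_nn_integral) auto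
  qed
  then show ?case unfolding run_Suc
    by (subst AE_bind[OF stp_kernel[OF y N t]]) (use P in \<open>auto simp: lessThan_def\<close>)
qed

end

context runsetup
begin

lemma stp_emeasure:
  fixes y :: "real^'d \<Rightarrow> real"
  assumes y[measurable]: "y \<in> borel_measurable borel" and N[measurable]: "N \<in> borel \<rightarrow>\<^sub>M prob_algebra borel"
    and t: "t < n" and f[measurable]: "f \<in> borel_measurable hist_space"
  shows "(\<integral>\<^sup>+h'. f h' \<partial>(cso_run y N Kn t \<bind> stp y N (Kn t) t)) = (\<integral>\<^sup>+h. \<integral>\<^sup>+h'. f h' \<partial>stp y N (Kn t) t h \<partial>cso_run y N Kn t)"
  by (rule nn_integral_bind[OF f stp_kernel[OF y N t]])

lemma stp_F_meas:
  fixes y :: "real^'d \<Rightarrow> real"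
  assumes y[measurable]: "y \<in> borel_measurable borel" and N[measurable]: "N \<in> borel \<rightarrow>\<^sub>M prob_algebra borel"
    and t: "t < n" and f[measurable]: "f \<in> borel_measurable hist_space"
  shows "(\<lambda>h. \<integral>\<^sup>+h'. f h' \<partial>stp y N (Kn t) t h) \<in> borel_measurable hist_space"
  by (rule measurable_compose[OF measurable_prob_algebraD[OF stp_meas[OF y N K[OF t]]] nn_integral_measurable_subprob_algebra[OF f]])

lemma couple:
  fixes y0 y1 :: "real^'d \<Rightarrow> real" and S :: "(real^'d) set"
  assumes y0[measurable]: "y0 \<in> borel_measurable borel" and y1[measurable]: "y1 \<in> borel_measurable borel"
    and N[measurable]: "N \<in> borel \<rightarrow>\<^sub>M prob_algebra borel"
    and S[measurable]: "S \<in> sets borel" and eq: "\<And>x. x \<notin> S \<Longrightarrow> y0 x = y1 x"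
  shows "t \<le> n \<Longrightarrow> density (cso_run y1 N Kn t) (indicator (avoid S t)) = density (cso_run y0 N Kn t) (indicator (avoid S t))"
proof (induction t)
  case 0 then show ?case by simp
next
  case (Suc t)
  then have IH: "density (cso_run y1 N Kn t) (indicator (avoid S t)) = density (cso_run y0 N Kn t) (indicator (avoid S t))"
    and t: "t < n" by auto
  define F where "F y A h = (\<integral>\<^sup>+h'. indicator (avoid S (Suc t)) h' * indicator A h' \<partial>stp y N (Kn t) t h)" for y and A :: "'d hist set" and h
  show ?case
  proof (rule measure_eqI)
    show "sets (density (cso_run y1 N Kn (Suc t)) (indicator (avoid S (Suc t)))) = sets (density (cso_run y0 N Kn (Suc t)) (indicator (avoid S (Suc t))))"
      using run_sets[OF y0 N, of "Suc t"] run_sets[OF y1 N, of "Suc t"] Suc by simp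
  next
    fix A assume "A \<in> sets (density (cso_run y1 N Kn (Suc t)) (indicator (avoid S (Suc t))))"
    then have A[measurable]: "A \<in> sets hist_space" using run_sets[OF y1 N, of "Suc t"] Suc by simp
    let ?G = "\<lambda>h'. indicator (avoid S (Suc t)) h' * indicator A h' :: ennreal"
    have Gm[measurable]: "?G \<in> borel_measurable hist_space" by measurable
    have dens_em: "emeasure (density (cso_run y N Kn (Suc t)) (indicator (avoid S (Suc t)))) A
        = (\<integral>\<^sup>+h'. ?G h' \<partial>cso_run y N Kn (Suc t))" if y: "y \<in> borel_measurable borel" for y
    proof -
      have sR: "sets (cso_run y N Kn (Suc t)) = sets hist_space" using run_sets[OF y N, of "Suc t"] Suc by simp
      have im: "(indicator (avoid S (Suc t)) :: _ \<Rightarrow> ennreal) \<in> borel_measurable (cso_run y N Kn (Suc t))"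
        by (subst measurable_cong_sets[OF sR refl]) measurable
      show ?thesis by (rule emeasure_density[OF im]) (use sR in simp)
    qed
    have expand: "(\<integral>\<^sup>+h'. ?G h' \<partial>stp y N (Kn t) t h) = (\<integral>\<^sup>+x. \<integral>\<^sup>+e. ?G (h(t := (x, y x + e))) \<partial>N x \<partial>Kn t h)"
      if [measurable]: "y \<in> borel_measurable borel" for y h
      by (rule stp_nn[OF _ N K[OF t] Gm]) measurable
    have G10: "?G (h(t := (x, y1 x + e))) = ?G (h(t := (x, y0 x + e)))" for h x e
      using eq[of x] by (cases "x \<in> S") (auto simp: avoid_def indicator_def less_Suc_eq)
    have Gav: "?G (h(t := v)) = indicator (avoid S t) h * ?G (h(t := v))" for h v
      by (auto simp: avoid_def indicator_def less_Suc_eq)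
    have F10: "F y1 A h = F y0 A h" for h
      unfolding F_def expand[OF y1] expand[OF y0] G10 ..
    have F0av: "F y0 A h = indicator (avoid S t) h * F y0 A h" for h
    proof (cases "h \<in> avoid S t")
      case True then show ?thesis by simp
    next
      case False
      have "F y0 A h = (\<integral>\<^sup>+x. \<integral>\<^sup>+e. 0 \<partial>N x \<partial>Kn t h)"
        unfolding F_def expand[OF y0] by (subst Gav) (use False in simp)
      then show ?thesis by simp
    qed
    have Fm: "F y0 A \<in> borel_measurable hist_space"
      unfolding F_def by (rule stp_F_meas[OF y0 N t Gm])
    have "emeasure (density (cso_run y1 N Kn (Suc t)) (indicator (avoid S (Suc t)))) A
        = (\<integral>\<^sup>+h'. ?G h' \<partial>cso_run y1 N Kn (Suc t))"
      using dens_em[OF y1] by simp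
    also have "\<dots> = (\<integral>\<^sup>+h. F y1 A h \<partial>cso_run y1 N Kn t)"
      unfolding run_Suc F_def by (rule stp_emeasure[OF y1 N t Gm])
    also have "\<dots> = (\<integral>\<^sup>+h. indicator (avoid S t) h * F y0 A h \<partial>cso_run y1 N Kn t)"
      using F10 F0av by simp
    also have "\<dots> = (\<integral>\<^sup>+h. F y0 A h \<partial>density (cso_run y1 N Kn t) (indicator (avoid S t)))"
      by (rule nn_integral_density[symmetric]) (use Fm run_sets[OF y1 N, of t] t in \<open>auto cong: measurable_cong_sets\<close>)
    also have "\<dots> = (\<integral>\<^sup>+h. F y0 A h \<partial>density (cso_run y0 N Kn t) (indicator (avoid S t)))"
      unfolding IH ..
    also have "\<dots> = (\<integral>\<^sup>+h. indicator (avoid S t) h * F y0 A h \<partial>cso_run y0 N Kn t)"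
      by (rule nn_integral_density) (use Fm run_sets[OF y0 N, of t] t in \<open>auto cong: measurable_cong_sets\<close>)
    also have "\<dots> = (\<integral>\<^sup>+h. F y0 A h \<partial>cso_run y0 N Kn t)"
      using F0av by simp
    also have "\<dots> = (\<integral>\<^sup>+h'. ?G h' \<partial>cso_run y0 N Kn (Suc t))"
      unfolding run_Suc F_def by (rule stp_emeasure[OF y0 N t Gm, symmetric])
    also have "\<dots> = emeasure (density (cso_run y0 N Kn (Suc t)) (indicator (avoid S (Suc t)))) A"
      using dens_em[OF y0] by simp
    finally show "emeasure (density (cso_run y1 N Kn (Suc t)) (indicator (avoid S (Suc t)))) A =
        emeasure (density (cso_run y0 N Kn (Suc t)) (indicator (avoid S (Suc t)))) A" .
  qed
qed

end

context runsetup
begin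

definition Lr :: "((real^'d) \<times> real \<Rightarrow> ennreal) \<Rightarrow> nat \<Rightarrow> 'd hist \<Rightarrow> ennreal" where
  "Lr l t h = (\<Prod>i<t. l (h i))"

lemma Lr_meas[measurable]:
  assumes [measurable]: "l \<in> borel_measurable borel"
  shows "Lr l t \<in> borel_measurable hist_space"
proof -
  have "(\<lambda>h::'d hist. h i) \<in> hist_space \<rightarrow>\<^sub>M borel" for i unfolding hist_space_def by measurable
  then have "(\<lambda>h::'d hist. l (h i)) \<in> borel_measurable hist_space" for i by measurable
  then show ?thesis unfolding Lr_def[abs_def] by measurable
qed

lemma Lr_upd: "Lr l (Suc t) (h(t := v)) = Lr l t h * l v"
proof -
  have "(\<Prod>i<t. l ((h(t := v)) i)) = (\<Prod>i<t. l (h i))" by (rule prod.cong) auto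
  then show ?thesis unfolding Lr_def by simp
qed

lemma dens:
  fixes y0 y1 :: "real^'d \<Rightarrow> real" and l :: "(real^'d) \<times> real \<Rightarrow> ennreal"
  assumes y0[measurable]: "y0 \<in> borel_measurable borel" and y1[measurable]: "y1 \<in> borel_measurable borel"
    and N0[measurable]: "N0 \<in> borel \<rightarrow>\<^sub>M prob_algebra borel"
    and N1[measurable]: "N1 \<in> borel \<rightarrow>\<^sub>M prob_algebra borel"
    and l[measurable]: "l \<in> borel_measurable borel"
    and key: "\<And>x f. f \<in> borel_measurable borel \<Longrightarrow>
        (\<integral>\<^sup>+e. f (y0 x + e) \<partial>N0 x) = (\<integral>\<^sup>+e. l (x, y1 x + e) * f (y1 x + e) \<partial>N1 x)"
  shows "t \<le> n \<Longrightarrow> cso_run y0 N0 Kn t = density (cso_run y1 N1 Kn t) (Lr l t)"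
proof (induction t)
  case 0
  have "density (return hist_space (\<lambda>_. (0, 0))) (Lr l 0) = density (return hist_space (\<lambda>_. (0, 0))) (\<lambda>_. 1)"
    unfolding Lr_def by simp
  also have "\<dots> = return hist_space (\<lambda>_. (0, 0))" by (simp add: density_1)
  finally show ?case by simp
next
  case (Suc t)
  then have IH: "cso_run y0 N0 Kn t = density (cso_run y1 N1 Kn t) (Lr l t)" and t: "t < n" by auto
  have sR0: "sets (cso_run y0 N0 Kn (Suc t)) = sets hist_space" using run_sets[OF y0 N0, of "Suc t"] Suc by simp
  have sR1: "sets (cso_run y1 N1 Kn (Suc t)) = sets hist_space" using run_sets[OF y1 N1, of "Suc t"] Suc by simp
  have sR1t: "sets (cso_run y1 N1 Kn t) = sets hist_space" using run_sets[OF y1 N1, of t] t by simp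
  show ?case
  proof (rule measure_eqI)
    show "sets (cso_run y0 N0 Kn (Suc t)) = sets (density (cso_run y1 N1 Kn (Suc t)) (Lr l (Suc t)))"
      using sR0 sR1 by simp
  next
    fix A assume "A \<in> sets (cso_run y0 N0 Kn (Suc t))"
    then have A[measurable]: "A \<in> sets hist_space" using sR0 by simp
    have iA: "(indicator A :: _ \<Rightarrow> ennreal) \<in> borel_measurable hist_space" by measurable
    have LA: "(\<lambda>h'. Lr l (Suc t) h' * indicator A h') \<in> borel_measurable hist_space" by measurable
    have inner: "(\<integral>\<^sup>+h'. Lr l (Suc t) h' * indicator A h' \<partial>stp y1 N1 (Kn t) t h)
        = Lr l t h * (\<integral>\<^sup>+h'. indicator A h' \<partial>stp y0 N0 (Kn t) t h)" for h
    proof -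
      have "(\<integral>\<^sup>+h'. Lr l (Suc t) h' * indicator A h' \<partial>stp y1 N1 (Kn t) t h)
          = (\<integral>\<^sup>+x. \<integral>\<^sup>+e. Lr l (Suc t) (h(t := (x, y1 x + e))) * indicator A (h(t := (x, y1 x + e))) \<partial>N1 x \<partial>Kn t h)"
        by (rule stp_nn[OF y1 N1 K[OF t] LA])
      also have "\<dots> = (\<integral>\<^sup>+x. Lr l t h * \<integral>\<^sup>+e. l (x, y1 x + e) * indicator A (h(t := (x, y1 x + e))) \<partial>N1 x \<partial>Kn t h)"
      proof (rule nn_integral_cong)
        fix x
        have m: "(\<lambda>e. l (x, y1 x + e) * indicator A (h(t := (x, y1 x + e)))) \<in> borel_measurable (N1 x)"
        proof -
          have sN: "sets (N1 x) = sets borel" using measurable_space[OF N1, of x] by (simp add: space_prob_algebra)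
          have "(\<lambda>e. h(t := (x, y1 x + e))) \<in> borel \<rightarrow>\<^sub>M hist_space"
            using measurable_compose[OF measurable_Pair[OF measurable_const[of "(h,x)"] measurable_ident] upd_meas[OF y1, of t]]
            by (simp add: case_prod_beta' space_pair_measure)
          then have "(\<lambda>e. l (x, y1 x + e) * indicator A (h(t := (x, y1 x + e)))) \<in> borel_measurable borel"
            by measurable
          then show ?thesis by (simp cong: measurable_cong_sets add: sN)
        qed
        show "(\<integral>\<^sup>+e. Lr l (Suc t) (h(t := (x, y1 x + e))) * indicator A (h(t := (x, y1 x + e))) \<partial>N1 x) =
            Lr l t h * \<integral>\<^sup>+e. l (x, y1 x + e) * indicator A (h(t := (x, y1 x + e))) \<partial>N1 x"
          unfolding Lr_upd by (subst nn_integral_cmult[OF m, symmetric]) (simp add: ac_simps)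
      qed
      also have "\<dots> = (\<integral>\<^sup>+x. Lr l t h * \<integral>\<^sup>+e. indicator A (h(t := (x, y0 x + e))) \<partial>N0 x \<partial>Kn t h)"
      proof (rule nn_integral_cong)
        fix x
        have f: "(\<lambda>v. indicator A (h(t := (x, v))) :: ennreal) \<in> borel_measurable borel"
        proof -
          have "(\<lambda>v. h(t := (x, v))) \<in> borel \<rightarrow>\<^sub>M hist_space"
          proof -
            have "(\<lambda>v::real. (x, v)) \<in> borel \<rightarrow>\<^sub>M (borel :: ((real^'d) \<times> real) measure)"
              unfolding borel_prod[symmetric] by measurable
            then have "(\<lambda>v::real. (h(t := (x, v)))) \<in> borel \<rightarrow>\<^sub>M PiM UNIV (\<lambda>_. borel)"
              by (intro measurable_fun_upd[where J=UNIV]) (auto simp: hist_space_def space_PiM intro!: measurable_const)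
            then show ?thesis by (simp add: hist_space_def)
          qed
          then show ?thesis by measurable
        qed
        show "Lr l t h * (\<integral>\<^sup>+e. l (x, y1 x + e) * indicator A (h(t := (x, y1 x + e))) \<partial>N1 x) =
            Lr l t h * (\<integral>\<^sup>+e. indicator A (h(t := (x, y0 x + e))) \<partial>N0 x)"
          using key[OF f, of x] by simp
      qed
      also have "\<dots> = Lr l t h * (\<integral>\<^sup>+x. \<integral>\<^sup>+e. indicator A (h(t := (x, y0 x + e))) \<partial>N0 x \<partial>Kn t h)"
      proof (rule nn_integral_cmult)
        have sK: "sets (Kn t h) = sets borel"
          using measurable_space[OF K[OF t], of h] by (simp add: space_prob_algebra)
        show "(\<lambda>x. \<integral>\<^sup>+e. indicator A (h(t := (x, y0 x + e))) \<partial>N0 x) \<in> borel_measurable (Kn t h)"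
          using inner_fun_meas[OF y0 N0 iA, of h t] sK by (simp cong: measurable_cong_sets)
      qed
      also have "\<dots> = Lr l t h * (\<integral>\<^sup>+h'. indicator A h' \<partial>stp y0 N0 (Kn t) t h)"
        by (subst stp_nn[OF y0 N0 K[OF t] iA]) simp
      finally show ?thesis .
    qed
    have F0m: "(\<lambda>h. \<integral>\<^sup>+h'. indicator A h' \<partial>stp y0 N0 (Kn t) t h) \<in> borel_measurable hist_space"
      by (rule stp_F_meas[OF y0 N0 t iA])
    have "emeasure (cso_run y0 N0 Kn (Suc t)) A = (\<integral>\<^sup>+h'. indicator A h' \<partial>cso_run y0 N0 Kn (Suc t))"
      using A sR0 by simp
    also have "\<dots> = (\<integral>\<^sup>+h. \<integral>\<^sup>+h'. indicator A h' \<partial>stp y0 N0 (Kn t) t h \<partial>cso_run y0 N0 Kn t)"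
      unfolding run_Suc by (rule stp_emeasure[OF y0 N0 t iA])
    also have "\<dots> = (\<integral>\<^sup>+h. Lr l t h * \<integral>\<^sup>+h'. indicator A h' \<partial>stp y0 N0 (Kn t) t h \<partial>cso_run y1 N1 Kn t)"
      unfolding IH by (rule nn_integral_density) (use F0m sR1t in \<open>auto cong: measurable_cong_sets\<close>)
    also have "\<dots> = (\<integral>\<^sup>+h. \<integral>\<^sup>+h'. Lr l (Suc t) h' * indicator A h' \<partial>stp y1 N1 (Kn t) t h \<partial>cso_run y1 N1 Kn t)"
      unfolding inner ..
    also have "\<dots> = (\<integral>\<^sup>+h'. Lr l (Suc t) h' * indicator A h' \<partial>cso_run y1 N1 Kn (Suc t))"
      unfolding run_Suc by (rule stp_emeasure[OF y1 N1 t LA, symmetric])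
    also have "\<dots> = emeasure (density (cso_run y1 N1 Kn (Suc t)) (Lr l (Suc t))) A"
    proof -
      have im: "Lr l (Suc t) \<in> borel_measurable (cso_run y1 N1 Kn (Suc t))"
        by (subst measurable_cong_sets[OF sR1 refl]) measurable
      show ?thesis by (rule emeasure_density[OF im, symmetric]) (use sR1 in simp)
    qed
    finally show "emeasure (cso_run y0 N0 Kn (Suc t)) A = emeasure (density (cso_run y1 N1 Kn (Suc t)) (Lr l (Suc t))) A" .
  qed
qed

end

context runsetup
begin

lemma chi:
  fixes y1 :: "real^'d \<Rightarrow> real" and l :: "(real^'d) \<times> real \<Rightarrow> ennreal"
  assumes y1[measurable]: "y1 \<in> borel_measurable borel"
    and N1[measurable]: "N1 \<in> borel \<rightarrow>\<^sub>M prob_algebra borel"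
    and l[measurable]: "l \<in> borel_measurable borel"
    and key2: "\<And>x. (\<integral>\<^sup>+e. (l (x, y1 x + e))\<^sup>2 \<partial>N1 x) \<le> c"
  shows "t \<le> n \<Longrightarrow> (\<integral>\<^sup>+h. (Lr l t h)\<^sup>2 \<partial>cso_run y1 N1 Kn t) \<le> c ^ t"
proof (induction t)
  case 0
  have "prob_space (cso_run y1 N1 Kn 0)" by (simp add: prob_space_return)
  then have "emeasure (cso_run y1 N1 Kn 0) (space (cso_run y1 N1 Kn 0)) = 1" by (rule prob_space.emeasure_space_1)
  then show ?case by (simp add: Lr_def)
next
  case (Suc t)
  then have IH: "(\<integral>\<^sup>+h. (Lr l t h)\<^sup>2 \<partial>cso_run y1 N1 Kn t) \<le> c ^ t" and t: "t < n" by auto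
  have L2m: "(\<lambda>h. (Lr l (Suc t) h)\<^sup>2) \<in> borel_measurable hist_space" by measurable
  have inner: "(\<integral>\<^sup>+h'. (Lr l (Suc t) h')\<^sup>2 \<partial>stp y1 N1 (Kn t) t h) \<le> (Lr l t h)\<^sup>2 * c" for h
  proof -
    have "(\<integral>\<^sup>+h'. (Lr l (Suc t) h')\<^sup>2 \<partial>stp y1 N1 (Kn t) t h)
        = (\<integral>\<^sup>+x. \<integral>\<^sup>+e. (Lr l (Suc t) (h(t := (x, y1 x + e))))\<^sup>2 \<partial>N1 x \<partial>Kn t h)"
      by (rule stp_nn[OF y1 N1 K[OF t] L2m])
    also have "\<dots> = (\<integral>\<^sup>+x. (Lr l t h)\<^sup>2 * \<integral>\<^sup>+e. (l (x, y1 x + e))\<^sup>2 \<partial>N1 x \<partial>Kn t h)"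
    proof (rule nn_integral_cong)
      fix x
      have sN: "sets (N1 x) = sets borel" using measurable_space[OF N1, of x] by (simp add: space_prob_algebra)
      have m: "(\<lambda>e. (l (x, y1 x + e))\<^sup>2) \<in> borel_measurable (N1 x)"
      proof -
        have "(\<lambda>e. (l (x, y1 x + e))\<^sup>2) \<in> borel_measurable borel" by measurable
        then show ?thesis by (simp cong: measurable_cong_sets add: sN)
      qed
      show "(\<integral>\<^sup>+e. (Lr l (Suc t) (h(t := (x, y1 x + e))))\<^sup>2 \<partial>N1 x) = (Lr l t h)\<^sup>2 * \<integral>\<^sup>+e. (l (x, y1 x + e))\<^sup>2 \<partial>N1 x"
        unfolding Lr_upd power_mult_distrib by (rule nn_integral_cmult[OF m])
    qed
    also have "\<dots> \<le> (\<integral>\<^sup>+x. (Lr l t h)\<^sup>2 * c \<partial>Kn t h)"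
      by (intro nn_integral_mono mult_left_mono key2) auto
    also have "\<dots> = (Lr l t h)\<^sup>2 * c"
    proof -
      have "prob_space (Kn t h)" using measurable_space[OF K[OF t], of h] by (simp add: space_prob_algebra)
      then show ?thesis by (simp add: prob_space.emeasure_space_1)
    qed
    finally show ?thesis .
  qed
  have "(\<integral>\<^sup>+h. (Lr l (Suc t) h)\<^sup>2 \<partial>cso_run y1 N1 Kn (Suc t))
      = (\<integral>\<^sup>+h. \<integral>\<^sup>+h'. (Lr l (Suc t) h')\<^sup>2 \<partial>stp y1 N1 (Kn t) t h \<partial>cso_run y1 N1 Kn t)"
    unfolding run_Suc by (rule stp_emeasure[OF y1 N1 t L2m])
  also have "\<dots> \<le> (\<integral>\<^sup>+h. (Lr l t h)\<^sup>2 * c \<partial>cso_run y1 N1 Kn t)"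
    by (intro nn_integral_mono inner)
  also have "\<dots> = (\<integral>\<^sup>+h. (Lr l t h)\<^sup>2 \<partial>cso_run y1 N1 Kn t) * c"
  proof -
    have sR: "sets (cso_run y1 N1 Kn t) = sets hist_space" using run_sets[OF y1 N1, of t] t by simp
    have "(\<lambda>h. (Lr l t h)\<^sup>2) \<in> borel_measurable (cso_run y1 N1 Kn t)"
      by (subst measurable_cong_sets[OF sR refl]) measurable
    then show ?thesis by (rule nn_integral_multc)
  qed
  also have "\<dots> \<le> c ^ t * c" by (intro mult_right_mono IH) auto
  finally show ?case by (simp add: ac_simps)
qed

lemma L_total:
  fixes y0 y1 :: "real^'d \<Rightarrow> real" and l :: "(real^'d) \<times> real \<Rightarrow> ennreal"
  assumes y0[measurable]: "y0 \<in> borel_measurable borel" and y1[measurable]: "y1 \<in> borel_measurable borel"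
    and N0[measurable]: "N0 \<in> borel \<rightarrow>\<^sub>M prob_algebra borel"
    and N1[measurable]: "N1 \<in> borel \<rightarrow>\<^sub>M prob_algebra borel"
    and l[measurable]: "l \<in> borel_measurable borel"
    and D: "cso_run y0 N0 Kn n = density (cso_run y1 N1 Kn n) (Lr l n)"
  shows "(\<integral>\<^sup>+h. Lr l n h \<partial>cso_run y1 N1 Kn n) = 1"
proof -
  have sR: "sets (cso_run y1 N1 Kn n) = sets hist_space" using run_sets[OF y1 N1, of n] by simp
  have sp: "space (cso_run y1 N1 Kn n) = UNIV" using sets_eq_imp_space_eq[OF sR] by simp
  have im: "Lr l n \<in> borel_measurable (cso_run y1 N1 Kn n)"
    by (subst measurable_cong_sets[OF sR refl]) measurable
  have "prob_space (cso_run y0 N0 Kn n)" using run_sp[OF y0 N0, of n] by (simp add: space_prob_algebra)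
  then have "emeasure (cso_run y0 N0 Kn n) (space (cso_run y0 N0 Kn n)) = 1" by (rule prob_space.emeasure_space_1)
  then have "emeasure (density (cso_run y1 N1 Kn n) (Lr l n)) (space (cso_run y1 N1 Kn n)) = 1"
    unfolding D by simp
  moreover have "space (cso_run y1 N1 Kn n) \<in> sets (cso_run y1 N1 Kn n)" by (rule sets.top)
  ultimately show ?thesis using emeasure_density[OF im, of "space (cso_run y1 N1 Kn n)"] sp by simp
qed

end

lemma ptwise:
  fixes g0 g1 L m D :: ennreal
  assumes "D \<le> g0 + g1"
  shows "4 * D * L \<le> 4 * (L * g0 + g1) + D * L\<^sup>2"
proof -
  have c1: "D * min L 1 \<le> L * g0 + g1"
  proof (cases "L \<le> 1")
    case True
    then have "g1 * L \<le> g1" using mult_left_mono[of L 1 g1] by simp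
    moreover have "D * L \<le> (g0 + g1) * L" using assms by (intro mult_right_mono) auto
    have e1: "D * min L 1 = D * L" using True by (simp add: min_def)
    have e2: "(g0 + g1) * L = L * g0 + g1 * L" by (metis distrib_right mult.commute)
    have "L * g0 + g1 * L \<le> L * g0 + g1" using \<open>g1 * L \<le> g1\<close> by (rule add_left_mono)
    then show ?thesis using e1 e2 \<open>D * L \<le> (g0 + g1) * L\<close> by (metis order_trans)
  next
    case False
    then have "g0 \<le> L * g0" using mult_right_mono[of 1 L g0] by simp
    then show ?thesis using False assms by (simp add: min_def) (metis add_right_mono order_trans add_increasing2 zero_le)
  qed
  have c2: "4 * L \<le> 4 * min L 1 + L\<^sup>2"
  proof (cases L)
    case (real r)
    then have r: "0 \<le> r" "L = ennreal r" by auto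
    have "4 * r \<le> 4 * min r 1 + r\<^sup>2"
    proof (cases "r \<le> 1")
      case True then show ?thesis using r by (simp add: min_def)
    next
      case False
      have "0 \<le> (r - 2)\<^sup>2" by simp
      then have "4 * r \<le> 4 + r\<^sup>2" by (simp add: power2_eq_square algebra_simps)
      then show ?thesis using False by (simp add: min_def)
    qed
    then have "ennreal (4 * r) \<le> ennreal (4 * min r 1 + r\<^sup>2)" by (rule ennreal_leI)
    moreover have "ennreal (4 * min r 1 + r\<^sup>2) = 4 * min L 1 + L\<^sup>2"
    proof -
      have mL: "min L 1 = ennreal (min r 1)" using r by (cases "r \<le> 1") (auto simp: min_def)
      have "ennreal (4 * min r 1 + r\<^sup>2) = ennreal (4 * min r 1) + ennreal (r\<^sup>2)"
        by (rule ennreal_plus) (use r in auto)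
      also have "\<dots> = 4 * ennreal (min r 1) + (ennreal r)\<^sup>2"
        using r by (simp add: ennreal_mult ennreal_power)
      finally show ?thesis using mL r by simp
    qed
    moreover have "ennreal (4 * r) = 4 * L" using r by (simp add: ennreal_mult)
    ultimately show ?thesis by simp
  next
    case top then show ?thesis by simp
  qed
  have "4 * D * L = D * (4 * L)" by (simp add: ac_simps)
  also have "\<dots> \<le> D * (4 * min L 1 + L\<^sup>2)" using c2 by (intro mult_left_mono) auto
  also have "\<dots> = 4 * (D * min L 1) + D * L\<^sup>2" by (simp add: distrib_left ac_simps)
  also have "\<dots> \<le> 4 * (L * g0 + g1) + D * L\<^sup>2" using c1 by (intro add_right_mono mult_left_mono) auto
  finally show ?thesis .
qed

lemma int_le_const:
  fixes f :: "'a \<Rightarrow> real"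
  assumes "prob_space M" "AE x in M. f x \<le> B" "0 \<le> B"
  shows "integral\<^sup>L M f \<le> B"
proof (cases "integrable M f")
  case True
  interpret prob_space M by fact
  have "integral\<^sup>L M f \<le> integral\<^sup>L M (\<lambda>_. B)"
    by (rule integral_mono_AE[OF True]) (use assms(2) in auto)
  then show ?thesis using prob_space by simp
next
  case False then show ?thesis using assms by (simp add: not_integrable_integral_eq)
qed

lemma cso_opt_cube:
  assumes "\<exists>!x. x \<in> cso_cube \<and> (\<forall>z\<in>cso_cube. y z \<le> y x)"
  shows "cso_opt y \<in> cso_cube" "\<forall>z\<in>cso_cube. y z \<le> y (cso_opt y)"
  using theI'[OF assms] unfolding cso_opt_def by auto

lemma pow_le1: "0 \<le> u \<Longrightarrow> u \<le> 1 \<Longrightarrow> 0 < (a::real) \<Longrightarrow> u powr a \<le> 1"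
  using powr_mono2[of a u 1] by simp

lemma regret_le:
  fixes K :: "nat \<Rightarrow> nat \<Rightarrow> 'd hist \<Rightarrow> (real^'d) measure"
  assumes adm: "admissible K Outp" and n: "1 \<le> n" and P: "P \<in> cso_class \<alpha> M Mt \<sigma>"
    and a: "0 < \<alpha>" and M: "0 < M"
  shows "expected_regret P K Outp n \<le> M"
proof -
  obtain y N where PyN: "P = (y, N)" by (cases P)
  from P[unfolded PyN cso_class_def] have y[measurable]: "y \<in> borel_measurable borel"
    and N[measurable]: "N \<in> borel \<rightarrow>\<^sub>M prob_algebra borel"
    and ex: "\<exists>!x. x \<in> cso_cube \<and> (\<forall>z\<in>cso_cube. y z \<le> y x)"
    and A3: "\<forall>x\<in>cso_cube. \<bar>y (cso_opt y) - y x\<bar> \<le> M * linf (cso_opt y - x) powr \<alpha>"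
    by auto
  from adm n have K: "\<And>t. t < n \<Longrightarrow> K n t \<in> hist_space \<rightarrow>\<^sub>M prob_algebra borel"
    and Kc: "\<And>t h. t < n \<Longrightarrow> AE x in K n t h. x \<in> cso_cube"
    and O[measurable]: "Outp n \<in> hist_space \<rightarrow>\<^sub>M prob_algebra borel"
    and Oc: "\<And>h. AE x in Outp n h. \<exists>i<n. x = fst (h i)"
    unfolding admissible_def by auto
  interpret runsetup n "K n" using K by unfold_locales
  have R: "prob_space (cso_run y N (K n) n)" using run_sp[OF y N, of n] by (simp add: space_prob_algebra)
  have c: "cso_opt y \<in> cso_cube" using cso_opt_cube[OF ex] by simp
  have bnd: "y (cso_opt y) - y x \<le> M" if "x \<in> cso_cube" for x
  proof -
    have "linf (cso_opt y - x) powr \<alpha> \<le> 1"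
      using pow_le1[OF linf_nonneg linf_cube[OF c that] a] .
    then have "M * linf (cso_opt y - x) powr \<alpha> \<le> M" using M by (simp add: mult_left_le)
    then show ?thesis using A3 that by fastforce
  qed
  have ae: "AE h in cso_run y N (K n) n. \<forall>i<n. fst (h i) \<in> cso_cube"
    by (rule run_ae_cube[OF y N]) (use Kc in auto)
  have "AE h in cso_run y N (K n) n. (\<integral>x. y (cso_opt y) - y x \<partial>Outp n h) \<le> M"
    using ae
  proof eventually_elim
    case (elim h)
    have "prob_space (Outp n h)" using measurable_space[OF O, of h] by (simp add: space_prob_algebra)
    moreover have "AE x in Outp n h. y (cso_opt y) - y x \<le> M"
      using Oc[of h] by eventually_elim (use elim bnd in auto)
    ultimately show ?case using M by (intro int_le_const) auto
  qed
  then show ?thesis unfolding PyN expected_regret_def using R M by (simp add: int_le_const)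
qed

definition tp :: "(real^'d \<Rightarrow> real) \<Rightarrow> (real^'d \<Rightarrow> real) \<Rightarrow> (real^'d \<Rightarrow> real) \<Rightarrow> real^'d \<Rightarrow> real measure" where
  "tp q a b x = distr (measure_pmf (bernoulli_pmf (q x))) borel (\<lambda>c. if c then a x else b x)"

lemma tp_sets[simp]: "sets (tp q a b x) = sets borel"
  unfolding tp_def by simp

lemma tp_prob: "prob_space (tp q a b x)"
  unfolding tp_def by (intro prob_space.prob_space_distr) (auto simp: measure_pmf.prob_space_axioms)

lemma tp_nn:
  assumes q: "0 \<le> q x" "q x \<le> 1" and f: "f \<in> borel_measurable borel"
  shows "(\<integral>\<^sup>+e. f e \<partial>tp q a b x) = ennreal (q x) * f (a x) + ennreal (1 - q x) * f (b x)"
proof -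
  have "(\<integral>\<^sup>+e. f e \<partial>tp q a b x) = (\<integral>\<^sup>+c. f (if c then a x else b x) \<partial>measure_pmf (bernoulli_pmf (q x)))"
    unfolding tp_def by (rule nn_integral_distr) (use f in auto)
  also have "\<dots> = (\<Sum>c\<in>UNIV. f (if c then a x else b x) * ennreal (pmf (bernoulli_pmf (q x)) c))"
    by (rule nn_integral_measure_pmf_support) auto
  also have "\<dots> = ennreal (q x) * f (a x) + ennreal (1 - q x) * f (b x)"
    using q by (simp add: UNIV_bool ac_simps)
  finally show ?thesis .
qed

lemma tp_meas:
  assumes [measurable]: "q \<in> borel_measurable borel" "a \<in> borel_measurable borel" "b \<in> borel_measurable borel"
    and q: "\<And>x. 0 \<le> q x" "\<And>x. q x \<le> 1"
  shows "tp q a b \<in> borel \<rightarrow>\<^sub>M prob_algebra borel"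
proof (rule measurable_prob_algebraI)
  show "prob_space (tp q a b x)" for x by (rule tp_prob)
  show "tp q a b \<in> borel \<rightarrow>\<^sub>M subprob_algebra borel"
  proof (rule measurable_subprob_algebra)
    show "subprob_space (tp q a b x)" for x using tp_prob prob_space_imp_subprob_space by blast
    show "sets (tp q a b x) = sets borel" for x by simp
    fix X :: "real set" assume X: "X \<in> sets borel"
    have "emeasure (tp q a b x) X = ennreal (q x) * indicator X (a x) + ennreal (1 - q x) * indicator X (b x)" for x
      using tp_nn[where q=q and x=x and f="indicator X" and a=a and b=b] q X by simp
    moreover have "(\<lambda>x. ennreal (q x) * indicator X (a x) + ennreal (1 - q x) * indicator X (b x)) \<in> borel_measurable borel"
      using X by measurable
    ultimately show "(\<lambda>x. emeasure (tp q a b x) X) \<in> borel_measurable borel" by simp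
  qed
qed

lemma hoeff2:
  fixes p h :: real
  assumes p: "0 \<le> p" "p \<le> 1" and h: "0 \<le> h"
  shows "(1 - p) * exp (- h * p) + p * exp (h * (1 - p)) \<le> exp (h\<^sup>2 / 8)"
proof -
  have aux: "-h * p + ln (1 + p * (exp h - 1)) \<le> h\<^sup>2 / 8"
    using Hoeffdings_lemma_aux[OF h p(1)] by simp
  have pos: "0 < 1 + p * (exp h - 1)"
  proof -
    have "0 \<le> p * (exp h - 1)" using p h by simp
    then show ?thesis by simp
  qed
  have "(1 - p) * exp (- h * p) + p * exp (h * (1 - p)) = exp (- h * p) * (1 + p * (exp h - 1))"
    by (simp add: algebra_simps exp_diff exp_add[symmetric] exp_minus field_simps)
  also have "\<dots> = exp (- h * p) * exp (ln (1 + p * (exp h - 1)))" using pos by simp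
  also have "\<dots> = exp (-h * p + ln (1 + p * (exp h - 1)))" by (simp only: exp_add[symmetric])
  also have "\<dots> \<le> exp (h\<^sup>2 / 8)" using aux by simp
  finally show ?thesis .
qed

lemma tp_subg:
  assumes q: "0 \<le> q x" "q x \<le> 1" and mean: "q x * a x + (1 - q x) * b x = 0"
    and w: "a x - b x = 2 * \<sigma>"
  shows "(\<integral>\<^sup>+e. ennreal (exp (lam * e)) \<partial>tp q a b x) \<le> ennreal (exp (lam\<^sup>2 * \<sigma>\<^sup>2 / 2))"
proof -
  have f: "(\<lambda>e. ennreal (exp (lam * e))) \<in> borel_measurable borel" by measurable
  have eq: "(\<integral>\<^sup>+e. ennreal (exp (lam * e)) \<partial>tp q a b x) = ennreal (q x * exp (lam * a x) + (1 - q x) * exp (lam * b x))"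
  proof -
    have "ennreal (q x * exp (lam * a x) + (1 - q x) * exp (lam * b x)) = ennreal (q x * exp (lam * a x)) + ennreal ((1 - q x) * exp (lam * b x))"
      by (rule ennreal_plus) (use q in auto)
    also have "\<dots> = ennreal (q x) * ennreal (exp (lam * a x)) + ennreal (1 - q x) * ennreal (exp (lam * b x))"
      using q by (simp add: ennreal_mult)
    finally show ?thesis unfolding tp_nn[where q=q and x=x, OF q f] by simp
  qed
  have b0: "b x = - (q x * (a x - b x))" using mean by (simp add: algebra_simps)
  then have b1: "b x = - q x * (2 * \<sigma>)" using w by simp
  have a1: "a x = (1 - q x) * (2 * \<sigma>)" using b1 w by (simp add: algebra_simps)
  note ab = a1 b1
  have "q x * exp (lam * a x) + (1 - q x) * exp (lam * b x) \<le> exp (lam\<^sup>2 * \<sigma>\<^sup>2 / 2)"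
  proof (cases "0 \<le> lam * \<sigma>")
    case True
    define h where "h = lam * (2 * \<sigma>)"
    have "0 \<le> h" using True by (simp add: h_def mult.commute)
    have "q x * exp (lam * a x) + (1 - q x) * exp (lam * b x) = (1 - q x) * exp (- h * q x) + q x * exp (h * (1 - q x))"
      unfolding ab h_def by (simp add: algebra_simps)
    also have "\<dots> \<le> exp (h\<^sup>2 / 8)" by (rule hoeff2[OF q \<open>0 \<le> h\<close>])
    also have "h\<^sup>2 / 8 = lam\<^sup>2 * \<sigma>\<^sup>2 / 2" unfolding h_def by (simp add: power2_eq_square field_simps)
    finally show ?thesis .
  next
    case False
    define h where "h = - lam * (2 * \<sigma>)"
    have "0 \<le> h" using False by (simp add: h_def mult.commute)
    have q': "0 \<le> 1 - q x" "1 - q x \<le> 1" using q by auto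
    have "q x * exp (lam * a x) + (1 - q x) * exp (lam * b x) = (1 - (1 - q x)) * exp (- h * (1 - q x)) + (1 - q x) * exp (h * (1 - (1 - q x)))"
      unfolding ab h_def by (simp add: algebra_simps)
    also have "\<dots> \<le> exp (h\<^sup>2 / 8)" by (rule hoeff2[OF q' \<open>0 \<le> h\<close>])
    also have "h\<^sup>2 / 8 = lam\<^sup>2 * \<sigma>\<^sup>2 / 2" unfolding h_def by (simp add: power2_eq_square field_simps)
    finally show ?thesis .
  qed
  then show ?thesis unfolding eq by (rule ennreal_leI)
qed

definition zn :: "real^'d \<Rightarrow> real measure" where "zn x = return borel 0"

lemma zn_meas: "zn \<in> borel \<rightarrow>\<^sub>M prob_algebra borel"
  unfolding zn_def[abs_def]
  by (rule measurable_const) (use measurable_space[OF measurable_return_prob_space[of borel], of 0] in simp)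

lemma zn_subg: "(\<integral>\<^sup>+e. ennreal (exp (lam * e)) \<partial>zn x) \<le> ennreal (exp (lam\<^sup>2 * \<sigma>\<^sup>2 / 2))"
  unfolding zn_def by (simp add: nn_integral_return)

lemma regret_nn:
  fixes K :: "nat \<Rightarrow> nat \<Rightarrow> 'd hist \<Rightarrow> (real^'d) measure" and y :: "real^'d \<Rightarrow> real"
  assumes adm: "admissible K Outp" and n: "1 \<le> n"
    and y[measurable]: "y \<in> borel_measurable borel" and N[measurable]: "N \<in> borel \<rightarrow>\<^sub>M prob_algebra borel"
    and gap0: "\<And>x. 0 \<le> y (cso_opt y) - y x" and gapB: "\<And>x. y (cso_opt y) - y x \<le> B"
  shows "ennreal (expected_regret (y, N) K Outp n) =
    (\<integral>\<^sup>+h. \<integral>\<^sup>+x. ennreal (y (cso_opt y) - y x) \<partial>Outp n h \<partial>cso_run y N (K n) n)"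
    and "0 \<le> expected_regret (y, N) K Outp n"
proof -
  from adm n have K: "\<And>t. t < n \<Longrightarrow> K n t \<in> hist_space \<rightarrow>\<^sub>M prob_algebra borel"
    and O[measurable]: "Outp n \<in> hist_space \<rightarrow>\<^sub>M prob_algebra borel"
    unfolding admissible_def by auto
  interpret runsetup n "K n" using K by unfold_locales
  define f where "f x = y (cso_opt y) - y x" for x
  have fm[measurable]: "f \<in> borel_measurable borel" unfolding f_def[abs_def] by measurable
  have B: "0 \<le> B" using gap0 gapB by (meson order_trans)
  define g where "g h = (\<integral>x. f x \<partial>Outp n h)" for h
  have inner: "(\<integral>\<^sup>+x. ennreal (f x) \<partial>Outp n h) = ennreal (g h)" for h
  proof -
    have sO: "sets (Outp n h) = sets borel" and pO: "prob_space (Outp n h)"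
      using measurable_space[OF O, of h] by (auto simp: space_prob_algebra)
    interpret prob_space "Outp n h" by fact
    have fO: "f \<in> borel_measurable (Outp n h)" using fm sO by (simp cong: measurable_cong_sets)
    have "integrable (Outp n h) f"
      by (rule integrable_const_bound[where B=B]) (use fO gap0 gapB in \<open>auto simp: f_def\<close>)
    then show ?thesis unfolding g_def by (rule nn_integral_eq_integral) (use gap0 in \<open>auto simp: f_def\<close>)
  qed
  have gm: "g \<in> borel_measurable hist_space"
    unfolding g_def[abs_def] by (rule measurable_compose[OF measurable_prob_algebraD[OF O] integral_measurable_subprob_algebra[OF fm]])
  have g0: "0 \<le> g h" for h unfolding g_def using gap0 by (intro integral_nonneg_AE) (auto simp: f_def)
  have gB: "g h \<le> B" for h
  proof -
    have "prob_space (Outp n h)" using measurable_space[OF O, of h] by (auto simp: space_prob_algebra)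
    then show ?thesis unfolding g_def using gapB B by (intro int_le_const) (auto simp: f_def)
  qed
  have sR: "sets (cso_run y N (K n) n) = sets hist_space" using run_sets[OF y N, of n] by simp
  have pR: "prob_space (cso_run y N (K n) n)" using run_sp[OF y N, of n] by (simp add: space_prob_algebra)
  interpret R: prob_space "cso_run y N (K n) n" by fact
  have gR: "g \<in> borel_measurable (cso_run y N (K n) n)" using gm sR by (simp cong: measurable_cong_sets)
  have "integrable (cso_run y N (K n) n) g"
    by (rule R.integrable_const_bound[where B=B]) (use gR g0 gB in auto)
  then have "(\<integral>\<^sup>+h. ennreal (g h) \<partial>cso_run y N (K n) n) = ennreal (\<integral>h. g h \<partial>cso_run y N (K n) n)"
    by (rule nn_integral_eq_integral) (use g0 in auto)
  moreover have "expected_regret (y, N) K Outp n = (\<integral>h. g h \<partial>cso_run y N (K n) n)"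
    unfolding expected_regret_def g_def f_def by simp
  ultimately show "ennreal (expected_regret (y, N) K Outp n) =
    (\<integral>\<^sup>+h. \<integral>\<^sup>+x. ennreal (y (cso_opt y) - y x) \<partial>Outp n h \<partial>cso_run y N (K n) n)"
    unfolding f_def[symmetric] inner by simp
  show "0 \<le> expected_regret (y, N) K Outp n"
    unfolding \<open>expected_regret (y, N) K Outp n = (\<integral>h. g h \<partial>cso_run y N (K n) n)\<close>
    using g0 by (intro integral_nonneg_AE) auto
qed

context fam
begin

lemma yb_ex: "\<exists>!x::real^'d. x \<in> cso_cube \<and> (\<forall>z\<in>(cso_cube::(real^'d) set). yb z \<le> yb x)"
proof (rule ex1I[of _ 0])
  show "(0::real^'d) \<in> cso_cube \<and> (\<forall>z\<in>(cso_cube::(real^'d) set). yb z \<le> yb 0)" using zero_cube yb_le0 by auto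
next
  fix x :: "real^'d" assume x: "x \<in> cso_cube \<and> (\<forall>z\<in>(cso_cube::(real^'d) set). yb z \<le> yb x)"
  then have "yb 0 \<le> yb x" using zero_cube by auto
  then show "x = 0" using yb_lt[of x] by force
qed

lemma yp_ex: assumes D: "0 < D" "D \<le> 1"
  shows "\<exists>!x::real^'d. x \<in> cso_cube \<and> (\<forall>z\<in>(cso_cube::(real^'d) set). yp D z \<le> yp D x)"
proof (rule ex1I[of _ "cvec D :: real^'d"])
  have le: "yp D z \<le> yp D (cvec D :: real^'d)" for z :: "real^'d"
    using yp_lt[OF D, of z] by (cases "z = cvec D") (auto simp: yp_c[OF D])
  show "(cvec D :: real^'d) \<in> cso_cube \<and> (\<forall>z\<in>(cso_cube::(real^'d) set). yp D z \<le> yp D (cvec D :: real^'d))"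
    using cvec_cube[of D] D le by auto
next
  fix x :: "real^'d" assume x: "x \<in> cso_cube \<and> (\<forall>z\<in>(cso_cube::(real^'d) set). yp D z \<le> yp D x)"
  then have "yp D (cvec D :: real^'d) \<le> yp D x" using cvec_cube[of D] D by auto
  then show "x = cvec D" using yp_lt[OF D, of x] by (force simp: yp_c[OF D])
qed

lemma yb_class:
  assumes N: "N \<in> borel \<rightarrow>\<^sub>M prob_algebra borel"
    and subg: "\<And>x lam. x \<in> cso_cube \<Longrightarrow> (\<integral>\<^sup>+e. ennreal (exp (lam * e)) \<partial>N x) \<le> ennreal (exp (lam\<^sup>2 * \<sigma>\<^sup>2 / 2))"
  shows "((yb :: real^'d \<Rightarrow> real), N) \<in> cso_class a M Mt \<sigma>"
proof -
  have A3: "Mt * linf (cso_opt (yb :: real^'d \<Rightarrow> real) - x) powr a \<le> \<bar>(yb :: real^'d \<Rightarrow> real) (cso_opt (yb :: real^'d \<Rightarrow> real)) - (yb :: real^'d \<Rightarrow> real) x\<bar> \<and>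
        \<bar>(yb :: real^'d \<Rightarrow> real) (cso_opt (yb :: real^'d \<Rightarrow> real)) - (yb :: real^'d \<Rightarrow> real) x\<bar> \<le> M * linf (cso_opt (yb :: real^'d \<Rightarrow> real) - x) powr a" if x: "(x::real^'d) \<in> cso_cube" for x
  proof -
    have l: "linf (cso_opt (yb :: real^'d \<Rightarrow> real) - x) = ld x 0" unfolding opt_yb using ld_cube[OF x zero_cube] linf_commute[of 0 x] by simp
    have g: "\<bar>(yb :: real^'d \<Rightarrow> real) (cso_opt yb) - yb x\<bar> = A * ld x 0 powr a" unfolding opt_yb yb_def using A_pos by simp
    show ?thesis unfolding l g using Mt_le_A A_le_M by (auto intro: mult_right_mono)
  qed
  show ?thesis unfolding cso_class_def using yb_ex N subg A3 by auto
qed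

lemma yp_class:
  assumes D: "0 < D" "D \<le> 1" and N: "N \<in> borel \<rightarrow>\<^sub>M prob_algebra borel"
    and subg: "\<And>x lam. x \<in> cso_cube \<Longrightarrow> (\<integral>\<^sup>+e. ennreal (exp (lam * e)) \<partial>N x) \<le> ennreal (exp (lam\<^sup>2 * \<sigma>\<^sup>2 / 2))"
  shows "((yp D :: real^'d \<Rightarrow> real), N) \<in> cso_class a M Mt \<sigma>"
proof -
  have A3: "Mt * linf (cso_opt ((yp D :: real^'d \<Rightarrow> real)) - x) powr a \<le> \<bar>(yp D :: real^'d \<Rightarrow> real) (cso_opt ((yp D :: real^'d \<Rightarrow> real))) - (yp D :: real^'d \<Rightarrow> real) x\<bar> \<and>
        \<bar>(yp D :: real^'d \<Rightarrow> real) (cso_opt ((yp D :: real^'d \<Rightarrow> real))) - (yp D :: real^'d \<Rightarrow> real) x\<bar> \<le> M * linf (cso_opt ((yp D :: real^'d \<Rightarrow> real)) - x) powr a" if x: "(x::real^'d) \<in> cso_cube" for x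
  proof -
    have l: "linf (cso_opt (yp D :: real^'d \<Rightarrow> real) - x) = ld x (cvec D)"
      unfolding opt_yp[OF D] using ld_cube[OF x cvec_cube[of D]] D linf_commute[of "cvec D" x] by simp
    have g: "\<bar>(yp D :: real^'d \<Rightarrow> real) (cso_opt (yp D)) - yp D x\<bar> = yp D (cvec D :: real^'d) - yp D x"
    proof -
      have h0: "0 \<le> yp D (cvec D :: real^'d) - yp D x" by (rule yp_bounds(1)[OF D])
      have h1: "cso_opt (yp D) = (cvec D :: real^'d)" by (rule opt_yp[OF D])
      show ?thesis unfolding h1 using h0 by simp
    qed
    show ?thesis unfolding l g using A3_yp_low[OF D, of x] A3_yp_up[OF D, of x] by auto
  qed
  show ?thesis unfolding cso_class_def using yp_ex[OF D] N subg A3 by auto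
qed

end

context fam
begin

lemma g_meas:
  fixes Outp :: "nat \<Rightarrow> 'd hist \<Rightarrow> (real^'d) measure" and y :: "real^'d \<Rightarrow> real"
  assumes O: "Outp n \<in> hist_space \<rightarrow>\<^sub>M prob_algebra borel" and y[measurable]: "y \<in> borel_measurable borel"
  shows "(\<lambda>h. \<integral>\<^sup>+x. ennreal (y c - y x) \<partial>Outp n h) \<in> borel_measurable hist_space"
proof -
  have "(\<lambda>x. ennreal (y c - y x)) \<in> borel_measurable borel" by measurable
  then show ?thesis by (rule measurable_compose[OF measurable_prob_algebraD[OF O] nn_integral_measurable_subprob_algebra])
qed

lemma gsum:
  fixes Outp :: "nat \<Rightarrow> 'd hist \<Rightarrow> (real^'d) measure"
  assumes O: "Outp n \<in> hist_space \<rightarrow>\<^sub>M prob_algebra borel" and D: "0 < D" "D \<le> 1"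
  shows "ennreal (Mt * D powr a) \<le> (\<integral>\<^sup>+x. ennreal (yb (cso_opt (yb :: real^'d \<Rightarrow> real)) - yb x) \<partial>Outp n h)
      + (\<integral>\<^sup>+x. ennreal (yp D (cso_opt (yp D :: real^'d \<Rightarrow> real)) - yp D x) \<partial>Outp n h)"
proof -
  have sO: "sets (Outp n h) = sets borel" and pO: "prob_space (Outp n h)"
    using measurable_space[OF O, of h] by (auto simp: space_prob_algebra)
  have m1: "(\<lambda>x::real^'d. ennreal (yb (cso_opt (yb :: real^'d \<Rightarrow> real)) - yb x)) \<in> borel_measurable (Outp n h)"
    by (subst measurable_cong_sets[OF sO refl]) measurable
  have m2: "(\<lambda>x::real^'d. ennreal (yp D (cso_opt (yp D :: real^'d \<Rightarrow> real)) - yp D x)) \<in> borel_measurable (Outp n h)"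
    by (subst measurable_cong_sets[OF sO refl]) measurable
  have e1: "(\<integral>\<^sup>+x. ennreal (yb (cso_opt (yb :: real^'d \<Rightarrow> real)) - yb x) \<partial>Outp n h) + (\<integral>\<^sup>+x. ennreal (yp D (cso_opt (yp D :: real^'d \<Rightarrow> real)) - yp D x) \<partial>Outp n h)
     = (\<integral>\<^sup>+x. ennreal (yb (cso_opt (yb :: real^'d \<Rightarrow> real)) - yb x) + ennreal (yp D (cso_opt (yp D :: real^'d \<Rightarrow> real)) - yp D x) \<partial>Outp n h)"
    by (rule nn_integral_add[OF m1 m2, symmetric])
  have e2: "(\<integral>\<^sup>+x. ennreal (Mt * D powr a) \<partial>Outp n h) \<le> (\<integral>\<^sup>+x. ennreal (yb (cso_opt (yb :: real^'d \<Rightarrow> real)) - yb x) + ennreal (yp D (cso_opt (yp D :: real^'d \<Rightarrow> real)) - yp D x) \<partial>Outp n h)"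
  proof (rule nn_integral_mono)
    fix x :: "real^'d"
    have i1: "ennreal (Mt * D powr a) \<le> ennreal ((yb (0::real^'d) - yb x) + (yp D (cvec D :: real^'d) - yp D x))"
      using gap_sum[OF D, of x] by (rule ennreal_leI)
    have i2: "ennreal ((yb (0::real^'d) - yb x) + (yp D (cvec D :: real^'d) - yp D x)) = ennreal (yb (0::real^'d) - yb x) + ennreal (yp D (cvec D :: real^'d) - yp D x)"
      by (rule ennreal_plus) (use yb_bounds(1)[of x] yp_bounds(1)[OF D, of x] in auto)
    from i1 i2 show "ennreal (Mt * D powr a) \<le> ennreal (yb (cso_opt (yb :: real^'d \<Rightarrow> real)) - yb x) + ennreal (yp D (cso_opt (yp D :: real^'d \<Rightarrow> real)) - yp D x)"
      by (simp add: opt_yb opt_yp[OF D])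
  qed
  have e3: "(\<integral>\<^sup>+x. ennreal (Mt * D powr a) \<partial>Outp n h) = ennreal (Mt * D powr a)"
    using pO by (simp add: prob_space.emeasure_space_1)
  show ?thesis using e1 e2 e3 by simp
qed

end

context fam
begin

lemma disjS:
  fixes x :: "real^'d"
  assumes jk: "j < k" and xj: "yp ((1/2)^Suc j) x \<noteq> yb x" and xk: "yp ((1/2)^Suc k) x \<noteq> yb x"
  shows False
proof -
  define Dj :: real where "Dj = (1/2)^Suc j"
  define Dk :: real where "Dk = (1/2)^Suc k"
  have Dj: "0 < Dj" "Dj \<le> 1" unfolding Dj_def by (simp, rule power_le_one, auto)
  have Dk: "0 < Dk" "Dk \<le> 1" unfolding Dk_def by (simp, rule power_le_one, auto)
  have "Dk \<le> (1/2)^Suc (Suc j)" unfolding Dk_def using jk by (intro power_decreasing) auto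
  then have Dkj: "Dk \<le> Dj / 2" unfolding Dj_def by simp
  have lj: "linf (x - cvec Dj) < Dj / 4" using region_linf[OF Dj xj[folded Dj_def]] .
  have lk: "linf (x - cvec Dk) < Dk / 4" using region_linf[OF Dk xk[folded Dk_def]] .
  have "linf ((cvec Dj - x) + (x - cvec Dk)) \<le> linf (cvec Dj - x) + linf (x - cvec Dk)" by (rule linf_triangle)
  moreover have "(cvec Dj - x) + (x - cvec Dk) = (cvec (Dj - Dk) :: real^'d)" by (simp add: cvec_def vec_eq_iff)
  moreover have "linf (cvec (Dj - Dk) :: real^'d) = Dj - Dk" using linf_cvec[of "Dj - Dk"] Dkj Dj by simp
  moreover have "linf (cvec Dj - x) = linf (x - cvec Dj)" by (rule linf_commute)
  ultimately have "Dj - Dk < Dj / 4 + Dk / 4" using lj lk by simp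
  then show False using Dkj Dj Dk by simp
qed

lemma noiseless:
  fixes K :: "nat \<Rightarrow> nat \<Rightarrow> 'd hist \<Rightarrow> (real^'d) measure"
  assumes adm: "admissible K Outp" and n: "1 \<le> n"
  shows "\<exists>D. (1/2)^(2*n) \<le> D \<and> D \<le> 1 \<and> 0 < D \<and>
     Mt * D powr a / 2 \<le> expected_regret ((yb :: real^'d \<Rightarrow> real), zn) K Outp n + expected_regret ((yp D :: real^'d \<Rightarrow> real), zn) K Outp n"
proof -
  from adm n have K: "\<And>t. t < n \<Longrightarrow> K n t \<in> hist_space \<rightarrow>\<^sub>M prob_algebra borel"
    and O[measurable]: "Outp n \<in> hist_space \<rightarrow>\<^sub>M prob_algebra borel"
    unfolding admissible_def by auto
  interpret runsetup n "K n" using K by unfold_locales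
  define S where "S j = {x::real^'d. yp ((1/2)^Suc j) x \<noteq> yb x}" for j
  have Ssets[measurable]: "S j \<in> sets borel" for j
  proof -
    have "Measurable.pred borel (\<lambda>x::real^'d. yp ((1/2)^Suc j) x \<noteq> yb x)" by measurable
    then show ?thesis unfolding S_def by (simp add: pred_def)
  qed
  have zn[measurable]: "zn \<in> borel \<rightarrow>\<^sub>M prob_algebra borel" by (rule zn_meas)
  define R0 where "R0 = cso_run (yb :: real^'d \<Rightarrow> real) zn (K n) n"
  have sR0: "sets R0 = sets hist_space" unfolding R0_def by (rule run_sets) (auto intro: zn_meas)
  have spR0: "space R0 = UNIV" using sets_eq_imp_space_eq[OF sR0] by simp
  have pR0: "prob_space R0" using run_sp[OF yb_measurable zn_meas, of n] unfolding R0_def by (simp add: space_prob_algebra)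
  interpret R0: prob_space R0 by fact
  define Ev where "Ev i j = {h::'d hist. fst (h i) \<in> S j}" for i j
  have Evsets: "Ev i j \<in> sets R0" for i j
  proof -
    have "Measurable.pred hist_space (\<lambda>h::'d hist. fst (h i) \<in> S j)" by measurable
    then show ?thesis unfolding Ev_def sR0 by (simp add: pred_def)
  qed
  define Bad where "Bad j = (\<Union>i\<in>{..<n}. Ev i j)" for j
  have Bsets: "Bad j \<in> sets R0" for j unfolding Bad_def using Evsets by auto
  have disjA: "disjoint_family_on (\<lambda>j. Ev i j) {..<2*n}" for i
    unfolding disjoint_family_on_def Ev_def S_def
  proof (intro ballI impI)
    fix j k :: nat assume "j \<noteq> k"
    show "{h::'d hist. fst (h i) \<in> {x. yp ((1/2)^Suc j) x \<noteq> yb x}} \<inter> {h. fst (h i) \<in> {x. yp ((1/2)^Suc k) x \<noteq> yb x}} = {}"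
      using \<open>j \<noteq> k\<close> disjS by (auto simp: neq_iff)
  qed
  have "(\<Sum>j<2*n. R0.prob (Bad j)) \<le> (\<Sum>j<2*n. \<Sum>i<n. R0.prob (Ev i j))"
    unfolding Bad_def by (intro sum_mono R0.finite_measure_subadditive_finite) (auto simp: Evsets)
  also have "\<dots> = (\<Sum>i<n. \<Sum>j<2*n. R0.prob (Ev i j))" by (rule sum.swap)
  also have "\<dots> = (\<Sum>i<n. R0.prob (\<Union>j\<in>{..<2*n}. Ev i j))"
    by (intro sum.cong refl R0.finite_measure_finite_Union[symmetric] disjA) (auto simp: Evsets)
  also have "\<dots> \<le> (\<Sum>i<n. 1)" by (intro sum_mono) auto
  finally have sumB: "(\<Sum>j<2*n. R0.prob (Bad j)) \<le> real n" by simp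
  have "\<exists>j<2*n. R0.prob (Bad j) \<le> 1/2"
  proof (rule ccontr)
    assume "\<not> ?thesis"
    then have "\<And>j. j \<in> {..<2*n} \<Longrightarrow> (1/2::real) < R0.prob (Bad j)" by auto
    then have "(\<Sum>j<2*n. (1/2::real)) < (\<Sum>j<2*n. R0.prob (Bad j))"
      by (intro sum_strict_mono) (use n in \<open>auto simp: lessThan_empty_iff\<close>)
    then show False using sumB by simp
  qed
  then obtain j where j: "j < 2*n" "R0.prob (Bad j) \<le> 1/2" by blast
  define D :: real where "D = (1/2)^Suc j"
  have D: "0 < D" "D \<le> 1" unfolding D_def by (simp, rule power_le_one, auto)
  have Dlow: "(1/2)^(2*n) \<le> D" unfolding D_def using j(1) by (intro power_decreasing) auto
  define E where "E = avoid (S j) n"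
  have E_eq: "E = space R0 - Bad j" unfolding E_def avoid_def Bad_def Ev_def spR0 by auto
  have Esets[measurable]: "E \<in> sets hist_space" unfolding E_def by measurable
  have probE: "1/2 \<le> R0.prob E" unfolding E_eq using R0.prob_compl[OF Bsets[of j]] j(2) by simp
  have cp: "density (cso_run (yp D) zn (K n) n) (indicator E) = density R0 (indicator E)"
    unfolding R0_def E_def
    by (rule couple[OF yb_measurable yp_measurable zn_meas Ssets]) (auto simp: S_def D_def)
  define g0 where "g0 h = (\<integral>\<^sup>+x. ennreal (yb (cso_opt (yb :: real^'d \<Rightarrow> real)) - yb x) \<partial>Outp n h)" for h
  define g1 where "g1 h = (\<integral>\<^sup>+x. ennreal (yp D (cso_opt (yp D :: real^'d \<Rightarrow> real)) - yp D x) \<partial>Outp n h)" for h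
  have g0m: "g0 \<in> borel_measurable hist_space" unfolding g0_def[abs_def] by (rule g_meas[where Outp=Outp and n=n, OF O yb_measurable])
  have g1m: "g1 \<in> borel_measurable hist_space" unfolding g1_def[abs_def] by (rule g_meas[where Outp=Outp and n=n, OF O yp_measurable])
  have gb0: "0 \<le> yb (cso_opt (yb :: real^'d \<Rightarrow> real)) - yb x" for x :: "real^'d"
    using yb_le0[of x] by (simp add: opt_yb)
  have gbA: "yb (cso_opt (yb :: real^'d \<Rightarrow> real)) - yb x \<le> A" for x :: "real^'d"
    using yb_ge[of x] by (simp add: opt_yb)
  have gp0: "0 \<le> yp D (cso_opt (yp D :: real^'d \<Rightarrow> real)) - yp D x" for x :: "real^'d"
    using yp_bounds(1)[OF D, of x] by (simp add: opt_yp[OF D])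
  have gpA: "yp D (cso_opt (yp D :: real^'d \<Rightarrow> real)) - yp D x \<le> 2 * A" for x :: "real^'d"
    using yp_bounds(2)[OF D, of x] by (simp add: opt_yp[OF D])
  have e0: "ennreal (expected_regret ((yb :: real^'d \<Rightarrow> real), zn) K Outp n) = (\<integral>\<^sup>+h. g0 h \<partial>R0)"
    and e0p: "0 \<le> expected_regret ((yb :: real^'d \<Rightarrow> real), zn) K Outp n"
    unfolding g0_def R0_def
    by (rule regret_nn(1)[OF adm n yb_measurable zn_meas gb0 gbA], rule regret_nn(2)[OF adm n yb_measurable zn_meas gb0 gbA])
  have e1: "ennreal (expected_regret ((yp D :: real^'d \<Rightarrow> real), zn) K Outp n) = (\<integral>\<^sup>+h. g1 h \<partial>cso_run (yp D) zn (K n) n)"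
    and e1p: "0 \<le> expected_regret ((yp D :: real^'d \<Rightarrow> real), zn) K Outp n"
    unfolding g1_def
    by (rule regret_nn(1)[OF adm n yp_measurable zn_meas gp0 gpA], rule regret_nn(2)[OF adm n yp_measurable zn_meas gp0 gpA])
  define R1 where "R1 = cso_run (yp D :: real^'d \<Rightarrow> real) zn (K n) n"
  have sR1: "sets R1 = sets hist_space" unfolding R1_def by (rule run_sets) (auto intro: zn_meas)
  have iE: "(indicator E :: 'd hist \<Rightarrow> ennreal) \<in> borel_measurable hist_space" by measurable
  have "(\<integral>\<^sup>+h. indicator E h * g0 h \<partial>R0) \<le> (\<integral>\<^sup>+h. g0 h \<partial>R0)"
    by (intro nn_integral_mono) (auto simp: indicator_def)
  moreover have "(\<integral>\<^sup>+h. indicator E h * g1 h \<partial>R0) \<le> (\<integral>\<^sup>+h. g1 h \<partial>R1)"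
  proof -
    have "(\<integral>\<^sup>+h. indicator E h * g1 h \<partial>R0) = (\<integral>\<^sup>+h. g1 h \<partial>density R0 (indicator E))"
      by (rule nn_integral_density[symmetric]) (use iE g1m sR0 in \<open>auto cong: measurable_cong_sets\<close>)
    also have "\<dots> = (\<integral>\<^sup>+h. g1 h \<partial>density R1 (indicator E))" unfolding R1_def cp ..
    also have "\<dots> = (\<integral>\<^sup>+h. indicator E h * g1 h \<partial>R1)"
      by (rule nn_integral_density) (use iE g1m sR1 in \<open>auto cong: measurable_cong_sets\<close>)
    also have "\<dots> \<le> (\<integral>\<^sup>+h. g1 h \<partial>R1)" by (intro nn_integral_mono) (auto simp: indicator_def)
    finally show ?thesis .
  qed
  moreover have "ennreal (Mt * D powr a) * emeasure R0 E \<le> (\<integral>\<^sup>+h. indicator E h * g0 h \<partial>R0) + (\<integral>\<^sup>+h. indicator E h * g1 h \<partial>R0)"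
  proof -
    have "ennreal (Mt * D powr a) * emeasure R0 E = (\<integral>\<^sup>+h. ennreal (Mt * D powr a) * indicator E h \<partial>R0)"
      using Esets sR0 by (simp add: nn_integral_cmult_indicator)
    also have "\<dots> \<le> (\<integral>\<^sup>+h. indicator E h * g0 h + indicator E h * g1 h \<partial>R0)"
    proof (rule nn_integral_mono)
      fix h
      have "ennreal (Mt * D powr a) \<le> g0 h + g1 h" unfolding g0_def g1_def by (rule gsum[where Outp=Outp and n=n, OF O D])
      then show "ennreal (Mt * D powr a) * indicator E h \<le> indicator E h * g0 h + indicator E h * g1 h"
        by (auto simp: indicator_def)
    qed
    also have "\<dots> = (\<integral>\<^sup>+h. indicator E h * g0 h \<partial>R0) + (\<integral>\<^sup>+h. indicator E h * g1 h \<partial>R0)"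
      by (rule nn_integral_add) (use iE g0m g1m sR0 in \<open>auto cong: measurable_cong_sets\<close>)
    finally show ?thesis .
  qed
  ultimately have "ennreal (Mt * D powr a) * emeasure R0 E \<le> ennreal (expected_regret ((yb :: real^'d \<Rightarrow> real), zn) K Outp n) + ennreal (expected_regret ((yp D :: real^'d \<Rightarrow> real), zn) K Outp n)"
    unfolding e0 e1 R1_def[symmetric] by (meson add_mono order_trans)
  moreover have "ennreal (Mt * D powr a) * emeasure R0 E = ennreal (Mt * D powr a * R0.prob E)"
    using Mt_pos by (simp add: R0.emeasure_eq_measure ennreal_mult)
  ultimately have "ennreal (Mt * D powr a * R0.prob E) \<le> ennreal (expected_regret ((yb :: real^'d \<Rightarrow> real), zn) K Outp n + expected_regret ((yp D :: real^'d \<Rightarrow> real), zn) K Outp n)"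
    using e0p e1p by (simp add: ennreal_plus)
  moreover have nn: "0 \<le> expected_regret ((yb :: real^'d \<Rightarrow> real), zn) K Outp n + expected_regret ((yp D :: real^'d \<Rightarrow> real), zn) K Outp n"
    using e0p e1p by simp
  ultimately have "Mt * D powr a * R0.prob E \<le> expected_regret ((yb :: real^'d \<Rightarrow> real), zn) K Outp n + expected_regret ((yp D :: real^'d \<Rightarrow> real), zn) K Outp n"
    by (simp only: ennreal_le_iff[OF nn])
  moreover have "Mt * D powr a / 2 \<le> Mt * D powr a * R0.prob E"
  proof -
    have "0 \<le> Mt * D powr a" using Mt_pos by simp
    with probE have "Mt * D powr a * (1/2) \<le> Mt * D powr a * R0.prob E" by (rule mult_left_mono)
    then show ?thesis by simp
  qed
  ultimately show ?thesis using Dlow D by (intro exI[of _ D]) auto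
qed

end

lemma chi_real:
  fixes u :: real and n :: nat
  assumes u: "0 \<le> u" "u \<le> 1/8" "u \<le> 1/(8* sqrt n)" and n: "1 \<le> n"
  shows "(1/2 - u)\<^sup>2/(1/2 + u) + (1/2 + u)\<^sup>2/(1/2 - u) \<le> 1 + 4/(15 * real n)"
proof -
  have p1: "0 < 1/2 + u" "0 < 1/2 - u" using u by auto
  have u64: "u\<^sup>2 \<le> 1/64"
  proof -
    have "u\<^sup>2 \<le> (1/8)\<^sup>2" using u by (intro power_mono) auto
    then show ?thesis by (simp add: power2_eq_square)
  qed
  have e: "(1/2 - u)\<^sup>2/(1/2 + u) + (1/2 + u)\<^sup>2/(1/2 - u) = 1 + 4*u\<^sup>2/(1/4 - u\<^sup>2)"
  proof -
    have d: "(1/2 + u) * (1/2 - u) = 1/4 - u\<^sup>2" by (simp add: power2_eq_square algebra_simps)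
    have pd: "0 < 1/4 - u\<^sup>2" using u64 by simp
    have gen: "a\<^sup>2/b + b\<^sup>2/a = (a^3 + b^3) / (b * a)" if "0 < a" "0 < b" for a b :: real
      using that by (simp add: field_simps power2_eq_square power3_eq_cube)
    have "(1/2 - u)\<^sup>2/(1/2 + u) + (1/2 + u)\<^sup>2/(1/2 - u) = ((1/2 - u)^3 + (1/2 + u)^3) / ((1/2 + u) * (1/2 - u))"
      by (rule gen) (use p1 in auto)
    also have "(1/2 - u)^3 + (1/2 + u)^3 = 1/4 + 3 * u\<^sup>2" by (simp add: power2_eq_square power3_eq_cube algebra_simps)
    also have "(1/4 + 3 * u\<^sup>2) / ((1/2 + u) * (1/2 - u)) = ((1/4 - u\<^sup>2) + 4*u\<^sup>2) / (1/4 - u\<^sup>2)"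
      unfolding d by (rule arg_cong[where f="\<lambda>t. t / (1/4 - u\<^sup>2)"]) simp
    also have "\<dots> = 1 + 4*u\<^sup>2/(1/4 - u\<^sup>2)"
    proof -
      have gen2: "(c + w)/c = 1 + w/c" if "c \<noteq> 0" for c w :: real using that by (simp add: field_simps)
      show ?thesis by (rule gen2) (use pd in simp)
    qed
    finally show ?thesis .
  qed
  have "4*u\<^sup>2/(1/4 - u\<^sup>2) \<le> 4*u\<^sup>2/(15/64)"
    using u64 by (intro divide_left_mono) auto
  also have "\<dots> = 256 * u\<^sup>2 / 15" by simp
  also have "\<dots> \<le> 256 * (1/(64 * real n)) / 15"
  proof -
    have sn: "0 < sqrt (real n)" using n by simp
    have "u\<^sup>2 \<le> (1/(8* sqrt n))\<^sup>2" using u by (intro power_mono) auto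
    also have "\<dots> = 1/(64 * real n)" using n by (simp add: power2_eq_square field_simps)
    finally show ?thesis by (intro divide_right_mono mult_left_mono) auto
  qed
  also have "\<dots> = 4/(15 * real n)" by simp
  finally show ?thesis unfolding e by simp
qed

lemma pow_exp_bound:
  fixes n :: nat assumes "1 \<le> n"
  shows "(1 + 4/(15 * real n))^n \<le> (3::real)"
proof -
  have "(1 + 4/(15*real n))^n \<le> (exp (4/(15*n)))^n"
    by (intro power_mono) (auto simp: add_nonneg_nonneg)
  also have "\<dots> = exp (real n * (4/(15*n)))" by (simp add: exp_of_nat_mult[symmetric])
  also have "real n * (4/(15*n)) = 4/15" using assms by simp
  also have "exp (4/15) \<le> exp (1::real)" by simp
  also have "\<dots> \<le> 3" using e_less_272 by simp
  finally show ?thesis .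
qed

context fam
begin

lemma noisy:
  fixes K :: "nat \<Rightarrow> nat \<Rightarrow> 'd hist \<Rightarrow> (real^'d) measure" and \<sigma> :: real
  assumes adm: "admissible K Outp" and n: "1 \<le> n" and sp: "0 < \<sigma>"
    and sb: "\<sigma> \<le> 2 * (2 * 4 powr a * Mt) * sqrt n"
  shows "\<exists>(P0::(real^'d \<Rightarrow> real) \<times> (real^'d \<Rightarrow> real measure)) P1. P0 \<in> cso_class a M Mt \<sigma> \<and> P1 \<in> cso_class a M Mt \<sigma> \<and>
     \<sigma> / (16 * 4 powr a * sqrt n) \<le> expected_regret P0 K Outp n + expected_regret P1 K Outp n"
proof -
  from adm n have K: "\<And>t. t < n \<Longrightarrow> K n t \<in> hist_space \<rightarrow>\<^sub>M prob_algebra borel"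
    and O[measurable]: "Outp n \<in> hist_space \<rightarrow>\<^sub>M prob_algebra borel"
    unfolding admissible_def by auto
  interpret runsetup n "K n" using K by unfold_locales
  define C1 where "C1 = 2 * 4 powr a * Mt"
  have C1: "0 < C1" unfolding C1_def using Mt_pos by simp
  have sn: "1 \<le> sqrt (real n)" using n by simp
  define d0 where "d0 = \<sigma> / (2 * C1 * sqrt n)"
  have d0: "0 < d0" "d0 \<le> 1" unfolding d0_def using sp C1 sn sb unfolding C1_def[symmetric] by (auto simp: field_simps)
  define D where "D = d0 powr (1/a)"
  have D: "0 < D" "D \<le> 1" unfolding D_def using d0 a_pos pow_le1[of d0 "1/a"] by auto
  have Da: "D powr a = d0" unfolding D_def using d0 a_pos by (simp add: powr_powr)
  define yB :: "real^'d \<Rightarrow> real" where "yB = yb"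
  define yP :: "real^'d \<Rightarrow> real" where "yP = yp D"
  have yBm[measurable]: "yB \<in> borel_measurable borel" unfolding yB_def by simp
  have yPm[measurable]: "yP \<in> borel_measurable borel" unfolding yP_def by simp
  define u where "u x = (yP x - yB x) / (4 * \<sigma>)" for x
  have um[measurable]: "u \<in> borel_measurable borel" unfolding u_def[abs_def] by measurable
  have u0: "0 \<le> u x" for x unfolding u_def yP_def yB_def using yp_ge_yb[OF D, of x] sp by simp
  have u1: "u x \<le> 1 / (8 * sqrt (real n))" for x
  proof -
    have "yP x - yB x \<le> C1 * d0" unfolding yP_def yB_def C1_def using diff_bound[OF D, of x] Da by simp
    also have "C1 * d0 = \<sigma> / (2 * sqrt n)" unfolding d0_def using C1 by simp
    finally have "yP x - yB x \<le> \<sigma> / (2 * sqrt n)" .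
    then show ?thesis unfolding u_def using sp sn by (simp add: field_simps)
  qed
  have u2: "u x \<le> 1/8" for x
  proof -
    have "1 / (8 * sqrt (real n)) \<le> 1/8" using sn by (simp add: field_simps)
    then show ?thesis using u1[of x] by simp
  qed
  define mm where "mm x = (yB x + yP x) / 2" for x
  have mmm[measurable]: "mm \<in> borel_measurable borel" unfolding mm_def[abs_def] by measurable
  define q0 where "q0 x = 1/2 - u x" for x
  define q1 where "q1 x = 1/2 + u x" for x
  have q0m[measurable]: "q0 \<in> borel_measurable borel" unfolding q0_def[abs_def] by measurable
  have q1m[measurable]: "q1 \<in> borel_measurable borel" unfolding q1_def[abs_def] by measurable
  have q0b: "0 \<le> q0 x" "q0 x \<le> 1" "0 < q0 x" "q0 x < 1" for x unfolding q0_def using u0[of x] u2[of x] by auto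
  have q1b: "0 \<le> q1 x" "q1 x \<le> 1" "0 < q1 x" "q1 x < 1" for x unfolding q1_def using u0[of x] u2[of x] by auto
  define a0 where "a0 x = mm x + \<sigma> - yB x" for x
  define b0 where "b0 x = mm x - \<sigma> - yB x" for x
  define a1 where "a1 x = mm x + \<sigma> - yP x" for x
  define b1 where "b1 x = mm x - \<sigma> - yP x" for x
  have a0m[measurable]: "a0 \<in> borel_measurable borel" unfolding a0_def[abs_def] by measurable
  have b0m[measurable]: "b0 \<in> borel_measurable borel" unfolding b0_def[abs_def] by measurable
  have a1m[measurable]: "a1 \<in> borel_measurable borel" unfolding a1_def[abs_def] by measurable
  have b1m[measurable]: "b1 \<in> borel_measurable borel" unfolding b1_def[abs_def] by measurable
  define N0 where "N0 = tp q0 a0 b0"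
  define N1 where "N1 = tp q1 a1 b1"
  have N0m[measurable]: "N0 \<in> borel \<rightarrow>\<^sub>M prob_algebra borel" unfolding N0_def by (rule tp_meas) (use q0b in auto)
  have N1m[measurable]: "N1 \<in> borel \<rightarrow>\<^sub>M prob_algebra borel" unfolding N1_def by (rule tp_meas) (use q1b in auto)
  have mean0: "q0 x * a0 x + (1 - q0 x) * b0 x = 0" for x
    unfolding q0_def a0_def b0_def mm_def u_def using sp by (simp add: field_simps)
  have mean1: "q1 x * a1 x + (1 - q1 x) * b1 x = 0" for x
    unfolding q1_def a1_def b1_def mm_def u_def using sp by (simp add: field_simps)
  have P0c: "(yB, N0) \<in> cso_class a M Mt \<sigma>"
    unfolding yB_def N0_def
    by (rule yb_class[OF tp_meas[OF q0m a0m b0m]]) (use q0b in auto, rule tp_subg, use q0b mean0 in \<open>auto simp: a0_def b0_def\<close>)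
  have P1c: "(yP, N1) \<in> cso_class a M Mt \<sigma>"
    unfolding yP_def N1_def
    by (rule yp_class[OF D tp_meas[OF q1m a1m b1m]]) (use q1b in auto, rule tp_subg, use q1b mean1 in \<open>auto simp: a1_def b1_def\<close>)
  define l where "l p = (if snd p = mm (fst p) + \<sigma> then ennreal (q0 (fst p) / q1 (fst p))
      else ennreal ((1 - q0 (fst p)) / (1 - q1 (fst p))))" for p :: "(real^'d) \<times> real"
  have lm[measurable]: "l \<in> borel_measurable borel"
  proof -
    have "l \<in> borel_measurable (borel \<Otimes>\<^sub>M borel)" unfolding l_def[abs_def] by measurable
    then show ?thesis by (simp add: borel_prod)
  qed
  have l_hi: "l (x, mm x + \<sigma>) = ennreal (q0 x / q1 x)" for x unfolding l_def by simp
  have l_lo: "l (x, mm x - \<sigma>) = ennreal ((1 - q0 x) / (1 - q1 x))" for x unfolding l_def using sp by simp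
  have key: "(\<integral>\<^sup>+e. f (yB x + e) \<partial>N0 x) = (\<integral>\<^sup>+e. l (x, yP x + e) * f (yP x + e) \<partial>N1 x)"
    if f[measurable]: "f \<in> borel_measurable borel" for x and f :: "real \<Rightarrow> ennreal"
  proof -
    have f0: "(\<lambda>e. f (yB x + e)) \<in> borel_measurable borel" by measurable
    have f1: "(\<lambda>e. l (x, yP x + e) * f (yP x + e)) \<in> borel_measurable borel" by measurable
    have "(\<integral>\<^sup>+e. f (yB x + e) \<partial>N0 x) = ennreal (q0 x) * f (mm x + \<sigma>) + ennreal (1 - q0 x) * f (mm x - \<sigma>)"
      unfolding N0_def tp_nn[where q=q0 and x=x, OF q0b(1,2) f0] by (simp add: a0_def b0_def)
    also have "\<dots> = ennreal (q1 x) * (l (x, mm x + \<sigma>) * f (mm x + \<sigma>)) + ennreal (1 - q1 x) * (l (x, mm x - \<sigma>) * f (mm x - \<sigma>))"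
    proof -
      have "ennreal (q1 x) * ennreal (q0 x / q1 x) = ennreal (q0 x)"
        using q0b[of x] q1b[of x] by (simp add: ennreal_mult[symmetric])
      moreover have "ennreal (1 - q1 x) * ennreal ((1 - q0 x) / (1 - q1 x)) = ennreal (1 - q0 x)"
        using q0b[of x] q1b[of x] by (simp add: ennreal_mult[symmetric])
      ultimately show ?thesis unfolding l_hi l_lo by (simp add: mult.assoc[symmetric])
    qed
    also have "\<dots> = (\<integral>\<^sup>+e. l (x, yP x + e) * f (yP x + e) \<partial>N1 x)"
      unfolding N1_def tp_nn[where q=q1 and x=x, OF q1b(1,2) f1] by (simp add: a1_def b1_def)
    finally show ?thesis .
  qed
  have key2: "(\<integral>\<^sup>+e. (l (x, yP x + e))\<^sup>2 \<partial>N1 x) \<le> ennreal (1 + 4 / (15 * real n))" for x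
  proof -
    have f2: "(\<lambda>e. (l (x, yP x + e))\<^sup>2) \<in> borel_measurable borel" by measurable
    have "(\<integral>\<^sup>+e. (l (x, yP x + e))\<^sup>2 \<partial>N1 x) = ennreal (q1 x) * (ennreal (q0 x / q1 x))\<^sup>2 + ennreal (1 - q1 x) * (ennreal ((1 - q0 x) / (1 - q1 x)))\<^sup>2"
      unfolding N1_def tp_nn[where q=q1 and x=x, OF q1b(1,2) f2] by (simp add: a1_def b1_def l_hi l_lo)
    also have "\<dots> = ennreal ((1/2 - u x)\<^sup>2/(1/2 + u x) + (1/2 + u x)\<^sup>2/(1/2 - u x))"
    proof -
      have e1: "ennreal (q1 x) * (ennreal (q0 x / q1 x))\<^sup>2 = ennreal ((1/2 - u x)\<^sup>2/(1/2 + u x))"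
        using q0b[of x] q1b[of x] unfolding q0_def q1_def
        by (simp add: ennreal_power ennreal_mult[symmetric] power2_eq_square)
      have e2: "ennreal (1 - q1 x) * (ennreal ((1 - q0 x) / (1 - q1 x)))\<^sup>2 = ennreal ((1/2 + u x)\<^sup>2/(1/2 - u x))"
        using q0b[of x] q1b[of x] unfolding q0_def q1_def
        by (simp add: ennreal_power ennreal_mult[symmetric] power2_eq_square)
      show ?thesis unfolding e1 e2 using u0[of x] u2[of x] by (simp add: ennreal_plus)
    qed
    also have "\<dots> \<le> ennreal (1 + 4 / (15 * real n))"
      by (rule ennreal_leI, rule chi_real) (use u0 u1 u2 n in auto)
    finally show ?thesis .
  qed
  define R0 where "R0 = cso_run yB N0 (K n) n"
  define R1 where "R1 = cso_run yP N1 (K n) n"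
  define L where "L = Lr l n"
  have Lm[measurable]: "L \<in> borel_measurable hist_space" unfolding L_def by measurable
  have dR: "R0 = density R1 L" unfolding R0_def R1_def L_def
    by (rule dens[OF yBm yPm N0m N1m lm key]) auto
  have chiR: "(\<integral>\<^sup>+h. (L h)\<^sup>2 \<partial>R1) \<le> ennreal (1 + 4 / (15 * real n)) ^ n"
    unfolding R1_def L_def by (rule chi[OF yPm N1m lm key2]) auto
  also have "\<dots> = ennreal ((1 + 4 / (15 * real n)) ^ n)" by (rule ennreal_power) simp
  also have "\<dots> \<le> ennreal 3" by (rule ennreal_leI[OF pow_exp_bound[OF n]])
  finally have chi3: "(\<integral>\<^sup>+h. (L h)\<^sup>2 \<partial>R1) \<le> ennreal 3" .
  have Ltot: "(\<integral>\<^sup>+h. L h \<partial>R1) = 1"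
    unfolding R1_def L_def by (rule L_total[OF yBm yPm N0m N1m lm]) (use dR in \<open>simp add: R0_def R1_def L_def\<close>)
  have sR1: "sets R1 = sets hist_space" unfolding R1_def by (rule run_sets[OF yPm N1m]) simp
  define g0 where "g0 h = (\<integral>\<^sup>+x. ennreal (yB (cso_opt yB) - yB x) \<partial>Outp n h)" for h
  define g1 where "g1 h = (\<integral>\<^sup>+x. ennreal (yP (cso_opt yP) - yP x) \<partial>Outp n h)" for h
  have g0m[measurable]: "g0 \<in> borel_measurable hist_space" unfolding g0_def[abs_def] by (rule g_meas[where Outp=Outp and n=n, OF O yBm])
  have g1m[measurable]: "g1 \<in> borel_measurable hist_space" unfolding g1_def[abs_def] by (rule g_meas[where Outp=Outp and n=n, OF O yPm])
  have gb0: "0 \<le> yB (cso_opt yB) - yB x" for x unfolding yB_def using yb_le0[of x] by (simp add: opt_yb)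
  have gbA: "yB (cso_opt yB) - yB x \<le> A" for x unfolding yB_def using yb_ge[of x] by (simp add: opt_yb)
  have gp0: "0 \<le> yP (cso_opt yP) - yP x" for x unfolding yP_def using yp_bounds(1)[OF D, of x] by (simp add: opt_yp[OF D])
  have gpA: "yP (cso_opt yP) - yP x \<le> 2 * A" for x unfolding yP_def using yp_bounds(2)[OF D, of x] by (simp add: opt_yp[OF D])
  have e0: "ennreal (expected_regret (yB, N0) K Outp n) = (\<integral>\<^sup>+h. g0 h \<partial>R0)"
    and e0p: "0 \<le> expected_regret (yB, N0) K Outp n"
    unfolding g0_def R0_def
    by (rule regret_nn(1)[OF adm n yBm N0m gb0 gbA], rule regret_nn(2)[OF adm n yBm N0m gb0 gbA])
  have e1: "ennreal (expected_regret (yP, N1) K Outp n) = (\<integral>\<^sup>+h. g1 h \<partial>R1)"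
    and e1p: "0 \<le> expected_regret (yP, N1) K Outp n"
    unfolding g1_def R1_def
    by (rule regret_nn(1)[OF adm n yPm N1m gp0 gpA], rule regret_nn(2)[OF adm n yPm N1m gp0 gpA])
  have e0': "(\<integral>\<^sup>+h. g0 h \<partial>R0) = (\<integral>\<^sup>+h. L h * g0 h \<partial>R1)"
    unfolding dR by (rule nn_integral_density) (use sR1 in \<open>auto cong: measurable_cong_sets\<close>)
  define Dl where "Dl = ennreal (Mt * D powr a)"
  have gs: "Dl \<le> g0 h + g1 h" for h
    unfolding Dl_def g0_def g1_def yB_def yP_def by (rule gsum[where Outp=Outp and n=n, OF O D])
  have "4 * Dl = (\<integral>\<^sup>+h. 4 * Dl * L h \<partial>R1)"
    using Ltot by (subst nn_integral_cmult) (use sR1 in \<open>auto cong: measurable_cong_sets\<close>)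
  also have "\<dots> \<le> (\<integral>\<^sup>+h. 4 * (L h * g0 h + g1 h) + Dl * (L h)\<^sup>2 \<partial>R1)"
    by (intro nn_integral_mono ptwise gs)
  also have "\<dots> = 4 * ((\<integral>\<^sup>+h. L h * g0 h \<partial>R1) + (\<integral>\<^sup>+h. g1 h \<partial>R1)) + Dl * (\<integral>\<^sup>+h. (L h)\<^sup>2 \<partial>R1)"
  proof -
    have m1: "(\<lambda>h. L h * g0 h) \<in> borel_measurable R1" using sR1 by (simp cong: measurable_cong_sets)
    have m2: "g1 \<in> borel_measurable R1" using sR1 by (simp cong: measurable_cong_sets)
    have m3: "(\<lambda>h. (L h)\<^sup>2) \<in> borel_measurable R1" using sR1 by (simp cong: measurable_cong_sets)
    have "(\<integral>\<^sup>+h. 4 * (L h * g0 h + g1 h) + Dl * (L h)\<^sup>2 \<partial>R1)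
        = (\<integral>\<^sup>+h. 4 * (L h * g0 h + g1 h) \<partial>R1) + (\<integral>\<^sup>+h. Dl * (L h)\<^sup>2 \<partial>R1)"
      by (rule nn_integral_add) (use m1 m2 m3 in auto)
    also have "(\<integral>\<^sup>+h. 4 * (L h * g0 h + g1 h) \<partial>R1) = 4 * (\<integral>\<^sup>+h. L h * g0 h + g1 h \<partial>R1)"
      by (rule nn_integral_cmult) (use m1 m2 in auto)
    also have "(\<integral>\<^sup>+h. L h * g0 h + g1 h \<partial>R1) = (\<integral>\<^sup>+h. L h * g0 h \<partial>R1) + (\<integral>\<^sup>+h. g1 h \<partial>R1)"
      by (rule nn_integral_add) (use m1 m2 in auto)
    also have "(\<integral>\<^sup>+h. Dl * (L h)\<^sup>2 \<partial>R1) = Dl * (\<integral>\<^sup>+h. (L h)\<^sup>2 \<partial>R1)"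
      by (rule nn_integral_cmult) (use m3 in auto)
    finally show ?thesis .
  qed
  also have "\<dots> \<le> 4 * (ennreal (expected_regret (yB, N0) K Outp n) + ennreal (expected_regret (yP, N1) K Outp n)) + Dl * ennreal 3"
    unfolding e0 e1 e0'[symmetric] by (intro add_left_mono mult_left_mono chi3) auto
  finally have ineq: "4 * Dl \<le> 4 * (ennreal (expected_regret (yB, N0) K Outp n) + ennreal (expected_regret (yP, N1) K Outp n)) + Dl * ennreal 3" .
  define r0 where "r0 = expected_regret (yB, N0) K Outp n"
  define r1 where "r1 = expected_regret (yP, N1) K Outp n"
  define dl where "dl = Mt * D powr a"
  have dl0: "0 \<le> dl" unfolding dl_def using Mt_pos by simp
  have "ennreal (4 * dl) \<le> ennreal (4 * (r0 + r1) + dl * 3)"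
  proof -
    have "ennreal (4 * dl) = 4 * Dl" unfolding Dl_def dl_def using dl0[unfolded dl_def] by (simp add: ennreal_mult)
    moreover have "ennreal (4 * (r0 + r1) + dl * 3) = 4 * (ennreal r0 + ennreal r1) + Dl * ennreal 3"
    proof -
      have nn: "0 \<le> r0" "0 \<le> r1" using e0p e1p unfolding r0_def r1_def by auto
      have c1: "ennreal (4 * (r0 + r1) + dl * 3) = ennreal (4 * (r0 + r1)) + ennreal (dl * 3)"
        by (rule ennreal_plus) (use nn dl0 in auto)
      have c2: "ennreal (4 * (r0 + r1)) = ennreal 4 * ennreal (r0 + r1)"
        by (rule ennreal_mult) (use nn in auto)
      have c3: "ennreal (r0 + r1) = ennreal r0 + ennreal r1" by (rule ennreal_plus) (use nn in auto)
      have c4: "ennreal (dl * 3) = ennreal dl * ennreal 3" by (rule ennreal_mult) (use dl0 in auto)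
      show ?thesis unfolding c1 c2 c3 c4 by (simp add: Dl_def dl_def)
    qed
    ultimately show ?thesis using ineq unfolding r0_def r1_def by simp
  qed
  then have "4 * dl \<le> 4 * (r0 + r1) + dl * 3"
    using e0p e1p dl0 unfolding r0_def[symmetric] r1_def[symmetric] by (subst (asm) ennreal_le_iff) auto
  then have fin: "dl / 4 \<le> r0 + r1" by simp
  have "dl = \<sigma> / (4 * 4 powr a * sqrt n)"
    unfolding dl_def Da d0_def C1_def using Mt_pos by (simp add: field_simps)
  then have eqd: "\<sigma> / (16 * 4 powr a * sqrt n) = dl / 4" by simp
  have fin2: "\<sigma> / (16 * 4 powr a * sqrt n) \<le> expected_regret (yB, N0) K Outp n + expected_regret (yP, N1) K Outp n"
    using fin eqd unfolding r0_def r1_def by linarith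
  show ?thesis
    by (rule exI[of _ "(yB, N0)"], rule exI[of _ "(yP, N1)"]) (use fin2 P0c P1c in blast)
qed

end

theorem theorem2:
  fixes \<alpha> M Mt :: real
    and K :: "nat \<Rightarrow> nat \<Rightarrow> (nat \<Rightarrow> ((real^'d) \<times> real)) \<Rightarrow> (real^'d) measure"
    and Outp :: "nat \<Rightarrow> (nat \<Rightarrow> ((real^'d) \<times> real)) \<Rightarrow> (real^'d) measure"
  assumes "\<alpha> > 0" and "M > 0" and "Mt > 0"
    and "M / (2 powr (4 * \<alpha> + 1) * Mt) \<ge> 1"
    and "M / Mt \<ge> inverse (1 - 5 powr (- \<alpha>)) * (1 + 1 / (5 powr \<alpha> - 3 powr \<alpha>)) * 80 powr \<alpha>"
    and "admissible K Outp"
  shows "\<exists>b1 b3 b5 b6. b1 > 0 \<and> b3 > 0 \<and> b5 > 0 \<and> b6 > 0 \<and>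
    (\<forall>\<sigma>::real. \<forall>n::nat. \<sigma> \<ge> 0 \<and> real n \<ge> max (b1 * \<sigma>\<^sup>2) b3 \<longrightarrow>
       (SUP P\<in>cso_class \<alpha> M Mt \<sigma>. expected_regret P K Outp n)
         \<ge> b6 * max (sqrt (\<sigma>\<^sup>2 / real n)) (exp (- b5 * real n)))"
proof -
  note a = assms(1) and Mpos = assms(2) and Mtpos = assms(3) and adm = assms(6)
  have Mbig: "2 powr (4 * \<alpha> + 1) * Mt \<le> M"
  proof -
    have "0 < 2 powr (4 * \<alpha> + 1) * Mt" using Mtpos by simp
    then show ?thesis using assms(4) by (simp add: le_divide_eq)
  qed
  interpret fam \<alpha> Mt M by unfold_locales (use a Mtpos Mbig in auto)
  define C1 where "C1 = 2 * 4 powr \<alpha> * Mt"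
  have C1: "0 < C1" unfolding C1_def using Mtpos by simp
  define b1 where "b1 = 1 / (4 * C1\<^sup>2)"
  define b5 where "b5 = 2 * \<alpha> * ln 2"
  define b6 where "b6 = min (Mt / 4) (1 / (32 * 4 powr \<alpha>))"
  have b1: "0 < b1" unfolding b1_def using C1 by simp
  have b5: "0 < b5" unfolding b5_def using a by simp
  have b6: "0 < b6" unfolding b6_def using Mtpos by simp
  have main: "\<forall>\<sigma>::real. \<forall>n::nat. \<sigma> \<ge> 0 \<and> real n \<ge> max (b1 * \<sigma>\<^sup>2) 1 \<longrightarrow>
       (SUP P\<in>cso_class \<alpha> M Mt \<sigma>. expected_regret P K Outp n)
         \<ge> b6 * max (sqrt (\<sigma>\<^sup>2 / real n)) (exp (- b5 * real n))"
  proof (intro allI impI)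
    fix \<sigma> :: real and n :: nat
    assume H: "0 \<le> \<sigma> \<and> max (b1 * \<sigma>\<^sup>2) 1 \<le> real n"
    then have s0: "0 \<le> \<sigma>" and n1: "1 \<le> n" and nb: "b1 * \<sigma>\<^sup>2 \<le> real n" by auto
    let ?S = "(SUP P\<in>cso_class \<alpha> M Mt \<sigma>. expected_regret P K Outp n)"
    have bdd: "bdd_above ((\<lambda>P. expected_regret P K Outp n) ` cso_class \<alpha> M Mt \<sigma>)"
      by (rule bdd_aboveI2[where M=M]) (rule regret_le[OF adm n1 _ a Mpos])
    have upper: "expected_regret P K Outp n \<le> ?S" if "P \<in> cso_class \<alpha> M Mt \<sigma>" for P
      by (rule cSUP_upper[OF that bdd])
    obtain D where D: "(1/2)^(2*n) \<le> D" "D \<le> 1" "0 < D"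
      and DS: "Mt * D powr \<alpha> / 2 \<le> expected_regret ((yb :: real^'d \<Rightarrow> real), zn) K Outp n + expected_regret ((yp D :: real^'d \<Rightarrow> real), zn) K Outp n"
      using noiseless[OF adm n1] by blast
    have c0: "((yb :: real^'d \<Rightarrow> real), zn) \<in> cso_class \<alpha> M Mt \<sigma>" by (rule yb_class[OF zn_meas zn_subg])
    have c1: "((yp D :: real^'d \<Rightarrow> real), zn) \<in> cso_class \<alpha> M Mt \<sigma>" by (rule yp_class[OF D(3) D(2) zn_meas zn_subg])
    have S1: "Mt * D powr \<alpha> / 4 \<le> ?S" using upper[OF c0] upper[OF c1] DS by simp
    have "exp (- b5 * real n) = ((1/2)^(2*n)) powr \<alpha>"
    proof -
      have "((1/2::real)^(2*n)) powr \<alpha> = exp (\<alpha> * ln ((1/2)^(2*n)))" by (simp add: powr_def)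
      also have "ln ((1/2::real)^(2*n)) = real (2*n) * ln (1/2)" using ln_realpow[of "1/2::real" "2*n"] by simp
      also have "ln (1/2::real) = - ln 2" by (simp add: ln_div)
      finally show ?thesis unfolding b5_def by (simp add: algebra_simps)
    qed
    also have "\<dots> \<le> D powr \<alpha>" using D a by (intro powr_mono2) auto
    finally have expD: "exp (- b5 * real n) \<le> D powr \<alpha>" .
    have T1: "b6 * exp (- b5 * real n) \<le> ?S"
    proof -
      have "b6 * exp (- b5 * real n) \<le> (Mt / 4) * exp (- b5 * real n)" unfolding b6_def by (intro mult_right_mono) auto
      also have "\<dots> \<le> (Mt / 4) * D powr \<alpha>" using expD Mtpos by (intro mult_left_mono) auto
      finally show ?thesis using S1 by simp
    qed
    have T2: "b6 * sqrt (\<sigma>\<^sup>2 / real n) \<le> ?S"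
    proof (cases "\<sigma> = 0")
      case True
      have "0 \<le> b6 * exp (- b5 * real n)" using b6 by simp
      then show ?thesis using T1 True by simp
    next
      case False
      then have sp: "0 < \<sigma>" using s0 by simp
      have sb: "\<sigma> \<le> 2 * (2 * 4 powr \<alpha> * Mt) * sqrt n"
      proof -
        have "\<sigma>\<^sup>2 \<le> (4 * C1\<^sup>2) * real n" using nb C1 unfolding b1_def by (simp add: field_simps)
        then have "sqrt (\<sigma>\<^sup>2) \<le> sqrt ((4 * C1\<^sup>2) * real n)" by (rule real_sqrt_le_mono)
        also have "sqrt ((4 * C1\<^sup>2) * real n) = 2 * C1 * sqrt n" using C1 by (simp add: real_sqrt_mult)
        finally show ?thesis using s0 unfolding C1_def by simp
      qed
      obtain P0 P1 where P: "P0 \<in> cso_class \<alpha> M Mt \<sigma>" "P1 \<in> cso_class \<alpha> M Mt \<sigma>"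
        and PS: "\<sigma> / (16 * 4 powr \<alpha> * sqrt n) \<le> expected_regret P0 K Outp n + expected_regret P1 K Outp n"
        using noisy[OF adm n1 sp sb] by blast
      have S2: "\<sigma> / (32 * 4 powr \<alpha> * sqrt n) \<le> ?S" using upper[OF P(1)] upper[OF P(2)] PS by simp
      have "sqrt (\<sigma>\<^sup>2 / real n) = \<sigma> / sqrt n" using s0 by (simp add: real_sqrt_divide)
      moreover have "b6 * (\<sigma> / sqrt n) \<le> (1 / (32 * 4 powr \<alpha>)) * (\<sigma> / sqrt n)"
        unfolding b6_def using s0 by (intro mult_right_mono) auto
      ultimately show ?thesis using S2 by simp
    qed
    have "b6 * max (sqrt (\<sigma>\<^sup>2 / real n)) (exp (- b5 * real n)) = max (b6 * sqrt (\<sigma>\<^sup>2 / real n)) (b6 * exp (- b5 * real n))"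
      using b6 by (simp add: max_mult_distrib_left)
    then show "b6 * max (sqrt (\<sigma>\<^sup>2 / real n)) (exp (- b5 * real n)) \<le> ?S" using T1 T2 by simp
  qed
  show ?thesis
    by (rule exI[of _ b1], rule exI[of _ "1::real"], rule exI[of _ b5], rule exI[of _ b6]) (use b1 b5 b6 main in auto)
qed

end
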